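(* In the inverse active sensing setting described in the context, restrict to Bayes-optimal strategies ($\kappa=*$) and assume the priors $\mathbb{P}\{\eta\mid *\}$ and $\mathbb{P}\{\rho\}$ are differentiable. Then the posterior $\mathbb{P}\{\eta,\rho\mid *,\mathcal{D}\}\propto\mathbb{P}\{\eta\mid*\}\mathbb{P}\{\rho\}\prod_{n=1}^N\prod_{t=0}^{\tau_n-1}\pi^*_\rho(\tilde\lambda_{n,t}\mid\mu_{n,t},\nu_{n,t};\eta)$ is differentiable in $(\eta,\rho)$ almost everywhere.
   Context: Timely decision problem: finite sets $\Theta,\Lambda,\Omega$; known distributions $q_{\theta,\lambda}$ on $\Omega$ and $p_{\theta,\lambda}\in(0,1)$. Latent $\theta\sim\mu_0$; survival $\nu_0=1$; at each time $t$ with $\nu_t=1$ the agent chooses either a decision $\hat\theta\in\Theta$ (stopping, time $\sigma$) or an acquisition $\lambda_t\in\Lambda$, after which, given $\theta$, $\nu_{t+1}=0$ w.p. $p_{\theta,\lambda_t}$, else $\nu_{t+1}=1$ and $\omega_{t+1}\sim q_{\theta,\lambda_t}$ is observed. Deadline $\delta=\min\{t:\nu_t=0\}$, $\tau=\min\{\delta,\sigma\}$. Posterior updates $M(\lambda,\mu,\omega)(\theta)\propto(1-p_{\theta,\lambda})q_{\theta,\lambda}(\omega)\mu(\theta)$, $\bar M(\lambda,\mu)(\theta)\propto p_{\theta,\lambda}\mu(\theta)$. Costs $c_\lambda>0$; preferences $\eta=(\eta_a,\eta_b,\eta_c)\in\mathcal H=\mathbb{R}^d$ with $\eta_a,\eta_b$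 indexed by $\Theta$ and $\eta_c$ by $\Lambda$. Loss $\ell=\sum_{\theta'}\eta_{a,\theta'}\mathbf 1\{\theta=\theta',\theta\ne\hat\theta,\tau<\delta\}+\sum_{\theta'}\eta_{b,\theta'}\mathbf 1\{\theta=\theta',\tau=\delta\}+\sum_{t<\tau}\eta_{c,\lambda_t}c_{\lambda_t}$; $V^*(\mu,\nu;\eta)$ is the optimal expected to-go loss. Decision factors $\bar Q_{\hat\theta}(\mu,\nu;\eta)=(1-\nu)\sum_{\theta'}\eta_{b,\theta'}\mu(\theta')+\nu\sum_{\theta'\ne\hat\theta}\eta_{a,\theta'}\mu(\theta')$; optimal acquisition factors $Q^*_\lambda(\mu,\nu;\eta)=(1-\nu)V^*(\mu,0;\eta)+\eta_{c,\lambda}c_\lambda+\nu\big(V^*(\bar M(\lambda,\mu),0;\eta)\sum_{\theta'}p_{\theta',\lambda}\mu(\theta')+\sum_\omega V^*(M(\lambda,\mu,\omega),1;\eta)\sum_{\theta'}(1-p_{\theta',\lambda})q_{\theta',\lambda}(\omega)\mu(\theta')\big)$. Writing $\tilde Q^*_{\tilde\lambda}$ for $Q^*_{\tilde\lambda}$ ($\tilde\lambda\in\Lambda$) or $\bar Q_{\tilde\lambda}$ ($\tilde\lambda\in\Theta$), the Bayes-optimal Boltzmann strategy with inverse temperature $\rho$ is $\pi^*_\rho(\tilde\lambda\mid\mu,\nu;\eta)=\exp(-\rho\tilde Q^*_{\tilde\lambda}(\mu,\nu;\eta))/\sum_{\tilde\lambda'\in\Lambda\cup\Theta}\exp(-\rho\tilde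 Q^*_{\tilde\lambda'}(\mu,\nu;\eta))$. Data $\mathcal D=\{(\tilde\lambda_{n,t},\tilde\omega_{n,t+1})_{t=0}^{\tau_n-1}\}_{n=1}^N$: observed choices $\tilde\lambda_{n,t}\in\Lambda\cup\Theta$ and outcomes of $N$ episodes; $\mu_{n,t}$ is computed recursively from the known episode prior $\mu_{n,0}$ via $M$, and $\nu_{n,t}=1$ prior to stopping. *)

theory Defs
  imports "HOL-Analysis.Analysis"
begin

(* Finite sets Theta, Lambda, Omega are finite types 'th, 'la, 'om.
   p th l = p_{theta,lambda};  q th l w = q_{theta,lambda}(w);  c l = c_lambda.
   Choices in Lambda \<union> Theta are the sum type 'la + 'th
   (Inl l = acquisition l, Inr th = decision th). *)

type_synonym ('th, 'la) pref = "(real^'th) \<times> (real^'th) \<times> (real^'la)"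

definition eta_a :: "('th, 'la) pref \<Rightarrow> 'th::finite \<Rightarrow> real" where
  "eta_a \<eta> th = fst \<eta> $ th"
definition eta_b :: "('th, 'la) pref \<Rightarrow> 'th::finite \<Rightarrow> real" where
  "eta_b \<eta> th = fst (snd \<eta>) $ th"
definition eta_c :: "('th, 'la) pref \<Rightarrow> 'la::finite \<Rightarrow> real" where
  "eta_c \<eta> l = snd (snd \<eta>) $ l"

definition is_dist :: "('a::finite \<Rightarrow> real) \<Rightarrow> bool" where
  "is_dist \<mu> \<longleftrightarrow> (\<forall>x. 0 \<le> \<mu> x) \<and> (\<Sum>x\<in>UNIV. \<mu> x) = 1"

definition Mupd :: "('th::finite \<Rightarrow> 'la \<Rightarrow> real) \<Rightarrow> ('th \<Rightarrow> 'la \<Rightarrow> 'om \<Rightarrow> real)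
    \<Rightarrow> 'la \<Rightarrow> ('th \<Rightarrow> real) \<Rightarrow> 'om \<Rightarrow> ('th \<Rightarrow> real)" where
  "Mupd p q l \<mu> w = (\<lambda>th. (1 - p th l) * q th l w * \<mu> th /
      (\<Sum>th'\<in>UNIV. (1 - p th' l) * q th' l w * \<mu> th'))"

definition Mbar :: "('th::finite \<Rightarrow> 'la \<Rightarrow> real) \<Rightarrow> 'la \<Rightarrow> ('th \<Rightarrow> real) \<Rightarrow> ('th \<Rightarrow> real)" where
  "Mbar p l \<mu> = (\<lambda>th. p th l * \<mu> th / (\<Sum>th'\<in>UNIV. p th' l * \<mu> th'))"

(* optimal to-go loss after the deadline has passed (nu = 0) *)
definition V0 :: "('th, 'la) pref \<Rightarrow> ('th::finite \<Rightarrow> real) \<Rightarrow> real" where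
  "V0 \<eta> \<mu> = (\<Sum>th\<in>UNIV. eta_b \<eta> th * \<mu> th)"

definition Qbar :: "('th, 'la::finite) pref \<Rightarrow> 'th::finite \<Rightarrow> ('th \<Rightarrow> real) \<Rightarrow> real \<Rightarrow> real" where
  "Qbar \<eta> thh \<mu> \<nu> = (1 - \<nu>) * (\<Sum>th\<in>UNIV. eta_b \<eta> th * \<mu> th)
      + \<nu> * (\<Sum>th\<in>UNIV - {thh}. eta_a \<eta> th * \<mu> th)"

(* acquisition factor, given a candidate value function W1 for nu = 1 *)
definition Qacq :: "('th::finite \<Rightarrow> 'la::finite \<Rightarrow> real) \<Rightarrow> ('th \<Rightarrow> 'la \<Rightarrow> 'om::finite \<Rightarrow> real)
    \<Rightarrow> ('la \<Rightarrow> real) \<Rightarrow> ('th, 'la) pref \<Rightarrow> (('th \<Rightarrow> real) \<Rightarrow> real)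
    \<Rightarrow> 'la \<Rightarrow> ('th \<Rightarrow> real) \<Rightarrow> real \<Rightarrow> real" where
  "Qacq p q c \<eta> W1 l \<mu> \<nu> = (1 - \<nu>) * V0 \<eta> \<mu> + eta_c \<eta> l * c l
     + \<nu> * (V0 \<eta> (Mbar p l \<mu>) * (\<Sum>th\<in>UNIV. p th l * \<mu> th)
           + (\<Sum>w\<in>UNIV. W1 (Mupd p q l \<mu> w) * (\<Sum>th\<in>UNIV. (1 - p th l) * q th l w * \<mu> th)))"

definition bellman :: "('th::finite \<Rightarrow> 'la::finite \<Rightarrow> real) \<Rightarrow> ('th \<Rightarrow> 'la \<Rightarrow> 'om::finite \<Rightarrow> real)
    \<Rightarrow> ('la \<Rightarrow> real) \<Rightarrow> ('th, 'la) pref \<Rightarrow> (('th \<Rightarrow> real) \<Rightarrow> real)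
    \<Rightarrow> ('th \<Rightarrow> real) \<Rightarrow> real" where
  "bellman p q c \<eta> W1 \<mu> = min (Min (range (\<lambda>thh. Qbar \<eta> thh \<mu> 1)))
                               (Min (range (\<lambda>l. Qacq p q c \<eta> W1 l \<mu> 1)))"

definition Vstar1 :: "('th::finite \<Rightarrow> 'la::finite \<Rightarrow> real) \<Rightarrow> ('th \<Rightarrow> 'la \<Rightarrow> 'om::finite \<Rightarrow> real)
    \<Rightarrow> ('la \<Rightarrow> real) \<Rightarrow> ('th, 'la) pref \<Rightarrow> ('th \<Rightarrow> real) \<Rightarrow> real" where
  "Vstar1 p q c \<eta> = (THE W. (\<forall>\<mu>. is_dist \<mu> \<longrightarrow> W \<mu> = bellman p q c \<eta> W \<mu>)
                          \<and> (\<forall>\<mu>. \<not> is_dist \<mu> \<longrightarrow> W \<mu> = 0)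
                          \<and> (\<exists>B. \<forall>\<mu>. \<bar>W \<mu>\<bar> \<le> B))"

definition Qstar :: "('th::finite \<Rightarrow> 'la::finite \<Rightarrow> real) \<Rightarrow> ('th \<Rightarrow> 'la \<Rightarrow> 'om::finite \<Rightarrow> real)
    \<Rightarrow> ('la \<Rightarrow> real) \<Rightarrow> ('th, 'la) pref \<Rightarrow> 'la \<Rightarrow> ('th \<Rightarrow> real) \<Rightarrow> real \<Rightarrow> real" where
  "Qstar p q c \<eta> l \<mu> \<nu> = Qacq p q c \<eta> (Vstar1 p q c \<eta>) l \<mu> \<nu>"

definition Qtilde :: "('th::finite \<Rightarrow> 'la::finite \<Rightarrow> real) \<Rightarrow> ('th \<Rightarrow> 'la \<Rightarrow> 'om::finite \<Rightarrow> real)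
    \<Rightarrow> ('la \<Rightarrow> real) \<Rightarrow> ('th, 'la) pref \<Rightarrow> 'la + 'th \<Rightarrow> ('th \<Rightarrow> real) \<Rightarrow> real \<Rightarrow> real" where
  "Qtilde p q c \<eta> a \<mu> \<nu> = (case a of Inl l \<Rightarrow> Qstar p q c \<eta> l \<mu> \<nu> | Inr thh \<Rightarrow> Qbar \<eta> thh \<mu> \<nu>)"

definition boltz :: "('th::finite \<Rightarrow> 'la::finite \<Rightarrow> real) \<Rightarrow> ('th \<Rightarrow> 'la \<Rightarrow> 'om::finite \<Rightarrow> real)
    \<Rightarrow> ('la \<Rightarrow> real) \<Rightarrow> ('th, 'la) pref \<Rightarrow> real \<Rightarrow> 'la + 'th \<Rightarrow> ('th \<Rightarrow> real) \<Rightarrow> real \<Rightarrow> real" where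
  "boltz p q c \<eta> \<rho> a \<mu> \<nu> = exp (- \<rho> * Qtilde p q c \<eta> a \<mu> \<nu>)
      / (\<Sum>b\<in>UNIV. exp (- \<rho> * Qtilde p q c \<eta> b \<mu> \<nu>))"

(* belief after processing a prefix of an episode: acquisitions update via M with the observed
   outcome; (decisions only occur at the last step and are never processed) *)
fun belief :: "('th::finite \<Rightarrow> 'la \<Rightarrow> real) \<Rightarrow> ('th \<Rightarrow> 'la \<Rightarrow> 'om \<Rightarrow> real)
    \<Rightarrow> ('th \<Rightarrow> real) \<Rightarrow> (('la + 'th) \<times> 'om) list \<Rightarrow> ('th \<Rightarrow> real)" where
  "belief p q \<mu> [] = \<mu>"
| "belief p q \<mu> ((a, w) # xs) =
     belief p q (case a of Inl l \<Rightarrow> Mupd p q l \<mu> w | Inr _ \<Rightarrow> \<mu>) xs"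

(* An episode: (mu_{n,0}, [(tilde lambda_{n,t}, tilde omega_{n,t+1}) for t < tau_n]).
   The outcome component of the last step is irrelevant. *)
type_synonym ('th, 'la, 'om) episode = "('th \<Rightarrow> real) \<times> (('la + 'th) \<times> 'om) list"

definition wf_episode :: "('th::finite, 'la::finite, 'om) episode \<Rightarrow> bool" where
  "wf_episode e \<longleftrightarrow> is_dist (fst e) \<and>
     (\<forall>t. t + 1 < length (snd e) \<longrightarrow> (\<exists>l. fst (snd e ! t) = Inl l))"

definition likelihood :: "('th::finite \<Rightarrow> 'la::finite \<Rightarrow> real) \<Rightarrow> ('th \<Rightarrow> 'la \<Rightarrow> 'om::finite \<Rightarrow> real)
    \<Rightarrow> ('la \<Rightarrow> real) \<Rightarrow> ('th, 'la, 'om) episode list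
    \<Rightarrow> ('th, 'la) pref \<Rightarrow> real \<Rightarrow> real" where
  "likelihood p q c D \<eta> \<rho> =
     (\<Prod>n<length D. \<Prod>t<length (snd (D ! n)).
        boltz p q c \<eta> \<rho> (fst (snd (D ! n) ! t))
              (belief p q (fst (D ! n)) (take t (snd (D ! n)))) 1)"

definition unnorm_posterior :: "('th::finite \<Rightarrow> 'la::finite \<Rightarrow> real) \<Rightarrow> ('th \<Rightarrow> 'la \<Rightarrow> 'om::finite \<Rightarrow> real)
    \<Rightarrow> ('la \<Rightarrow> real) \<Rightarrow> (('th, 'la) pref \<Rightarrow> real) \<Rightarrow> (real \<Rightarrow> real)
    \<Rightarrow> ('th, 'la, 'om) episode list \<Rightarrow> (('th, 'la) pref) \<times> real \<Rightarrow> real" where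
  "unnorm_posterior p q c prior_eta prior_rho D x =
     prior_eta (fst x) * prior_rho (snd x) * likelihood p q c D (fst x) (snd x)"

end

theory Submission
  imports Defs
begin


lemma null_by_lines:
  fixes S :: "'a::euclidean_space set" and v :: 'a
  assumes S: "S \<in> sets borel"
    and sl: "\<And>x. {t::real. x + t *\<^sub>R v \<in> S} \<in> null_sets lborel"
  shows "S \<in> null_sets lborel"
proof -
  define G where "G = {p :: real \<times> 'a. fst p \<in> {0..1} \<and> snd p + fst p *\<^sub>R v \<in> S}"
  have cont: "continuous_on UNIV (\<lambda>p :: real \<times> 'a. snd p + fst p *\<^sub>R v)"
    by (intro continuous_intros)
  have "(\<lambda>p :: real \<times> 'a. snd p + fst p *\<^sub>R v) \<in> borel_measurable borel"
    using cont by (simp add: borel_measurable_continuous_onI)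
  then have m1: "(\<lambda>p :: real \<times> 'a. snd p + fst p *\<^sub>R v) -` S \<in> sets borel"
  proof -
    have "(\<lambda>p :: real \<times> 'a. snd p + fst p *\<^sub>R v) -` S \<inter> space borel \<in> sets borel"
      by (rule measurable_sets[OF \<open>_ \<in> borel_measurable borel\<close> S])
    then show ?thesis by simp
  qed
  have m2: "{p :: real \<times> 'a. fst p \<in> {0..1}} \<in> sets borel"
  proof -
    have "{p :: real \<times> 'a. fst p \<in> {0..1}} = {0..1} \<times> UNIV" by auto
    then show ?thesis by (simp add: borel_prod[symmetric])
  qed
  have Gb: "G \<in> sets borel"
  proof -
    have "G = {p :: real \<times> 'a. fst p \<in> {0..1}} \<inter> (\<lambda>p :: real \<times> 'a. snd p + fst p *\<^sub>R v) -` S"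
      unfolding G_def by auto
    then show ?thesis using sets.Int[OF m2 m1] by simp
  qed
  have Gs: "G \<in> sets (lborel \<Otimes>\<^sub>M (lborel :: 'a measure))"
  proof -
    have "sets (lborel \<Otimes>\<^sub>M (lborel :: 'a measure)) = sets (borel :: (real \<times> 'a) measure)"
      by (simp only: lborel_prod sets_lborel)
    then show ?thesis using Gb by simp
  qed
  have e1: "emeasure (lborel \<Otimes>\<^sub>M lborel) G = (\<integral>\<^sup>+t. emeasure lborel (Pair t -` G) \<partial>lborel)"
    by (rule lborel.emeasure_pair_measure_alt[OF Gs])
  have tr: "emeasure lborel {y. y + t *\<^sub>R v \<in> S} = emeasure lborel S" for t
  proof -
    have "emeasure lborel S = emeasure (distr lborel borel ((+) (t *\<^sub>R v))) S"
      by (simp add: lborel_distr_plus)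
    also have "\<dots> = emeasure lborel ((+) (t *\<^sub>R v) -` S)"
      using S by (simp add: emeasure_distr)
    also have "(+) (t *\<^sub>R v) -` S = {y. y + t *\<^sub>R v \<in> S}" by (auto simp: add.commute)
    finally show ?thesis by simp
  qed
  have "(\<integral>\<^sup>+t. emeasure lborel (Pair t -` G) \<partial>lborel) = (\<integral>\<^sup>+t. emeasure lborel S * indicator {0..1::real} t \<partial>lborel)"
  proof (rule nn_integral_cong[where M="lborel::real measure"])
    fix t :: real
    assume "t \<in> space lborel"
    show "emeasure lborel (Pair t -` G) = emeasure lborel S * indicator {0..1} t"
    proof (cases "t \<in> {0..1}")
      case True
      then have "Pair t -` G = {y. y + t *\<^sub>R v \<in> S}" by (auto simp: G_def)
      then show ?thesis using True tr[of t] by simp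
    next
      case False
      then have "Pair t -` G = {}" by (auto simp: G_def)
      then show ?thesis using False by simp
    qed
  qed
  also have "\<dots> = emeasure lborel S"
    by (simp add: nn_integral_cmult_indicator)
  finally have E1: "emeasure (lborel \<Otimes>\<^sub>M lborel) G = emeasure lborel S" using e1 by simp
  have e2: "emeasure (lborel \<Otimes>\<^sub>M lborel) G = (\<integral>\<^sup>+y. emeasure lborel ((\<lambda>t. (t, y)) -` G) \<partial>lborel)"
    by (rule lborel_pair.emeasure_pair_measure_alt2[OF Gs])
  have "emeasure lborel ((\<lambda>t. (t, y)) -` G) = 0" for y :: 'a
  proof -
    have "(\<lambda>t. (t, y)) -` G \<subseteq> {t::real. y + t *\<^sub>R v \<in> S}" by (auto simp: G_def)
    moreover have "{t::real. y + t *\<^sub>R v \<in> S} \<in> sets lborel"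
      using sl[of y] by (rule null_setsD2)
    ultimately have "emeasure lborel ((\<lambda>t. (t, y)) -` G) \<le> emeasure lborel {t::real. y + t *\<^sub>R v \<in> S}"
      by (rule emeasure_mono)
    also have "\<dots> = 0" using sl[of y] by (rule null_setsD1)
    finally show ?thesis by simp
  qed
  then have "emeasure (lborel \<Otimes>\<^sub>M lborel) G = 0" using e2 by simp
  then have "emeasure lborel S = 0" using E1 by simp
  then show ?thesis using S by (simp add: null_sets_def)
qed



definition sl1 :: "(real \<Rightarrow> real) \<Rightarrow> real \<Rightarrow> real \<Rightarrow> real" where
  "sl1 \<phi> t h = (\<phi> (t + h) - \<phi> t) / h"

definition bad1 :: "(real \<Rightarrow> real) \<Rightarrow> real \<Rightarrow> bool" where
  "bad1 \<phi> t \<longleftrightarrow> (\<exists>r1 r2. r1 < r2 \<and> (\<forall>h<0. sl1 \<phi> t h \<le> r1) \<and> (\<forall>h>0. r2 \<le> sl1 \<phi> t h))"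

lemma dq_swap: "((x::real) - y) / (a - b) = (y - x) / (b - a)"
  by (metis minus_diff_eq minus_divide_divide)

lemma sl1_mono:
  assumes cv: "convex_on UNIV \<phi>" and h: "h1 < h2" "h1 \<noteq> 0" "h2 \<noteq> 0"
  shows "sl1 \<phi> t h1 \<le> sl1 \<phi> t h2"
proof -
  have S: "\<And>a b c. a < b \<Longrightarrow> b < c \<Longrightarrow> (\<phi> a - \<phi> b) / (a - b) \<le> (\<phi> a - \<phi> c) / (a - c)
     \<and> (\<phi> a - \<phi> c) / (a - c) \<le> (\<phi> b - \<phi> c) / (b - c)"
    using convex_on_slope_le[OF cv] by blast
  have sw: "\<And>a b. (\<phi> a - \<phi> b) / (a - b) = (\<phi> b - \<phi> a) / (b - a)"
    by (rule dq_swap)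
  consider "h1 < h2 \<and> h2 < 0" | "h1 < 0 \<and> 0 < h2" | "0 < h1 \<and> h1 < h2" using h by linarith
  then show ?thesis
  proof cases
    case 1
    then have "t + h1 < t + h2" "t + h2 < t" by auto
    from S[OF this] have "(\<phi> (t+h1) - \<phi> t) / ((t+h1) - t) \<le> (\<phi> (t+h2) - \<phi> t) / ((t+h2) - t)" by simp
    then show ?thesis unfolding sl1_def using sw by (simp add: add.commute)
  next
    case 2
    then have "t + h1 < t" "t < t + h2" by auto
    from S[OF this] have "(\<phi> (t+h1) - \<phi> t) / ((t+h1) - t) \<le> (\<phi> t - \<phi> (t+h2)) / (t - (t+h2))" by simp
    then show ?thesis unfolding sl1_def using sw[of t "t+h2"] by (simp add: add.commute)
  next
    case 3
    then have "t < t + h1" "t + h1 < t + h2" by auto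
    from S[OF this] have "(\<phi> t - \<phi> (t+h1)) / (t - (t+h1)) \<le> (\<phi> t - \<phi> (t+h2)) / (t - (t+h2))" by simp
    then show ?thesis unfolding sl1_def using sw[of t "t+h1"] sw[of t "t+h2"] by (simp add: add.commute)
  qed
qed

lemma countable_bad1:
  assumes cv: "convex_on UNIV \<phi>"
  shows "countable {t. bad1 \<phi> t}"
proof -
  define P where "P r t \<longleftrightarrow> (\<forall>h<0. sl1 \<phi> t h < r) \<and> (\<forall>h>0. r < sl1 \<phi> t h)" for r t
  have sub: "{t. bad1 \<phi> t} \<subseteq> (\<Union>r\<in>\<rat>. {t. P r t})"
  proof
    fix t assume "t \<in> {t. bad1 \<phi> t}"
    then obtain r1 r2 where r: "r1 < r2" "\<forall>h<0. sl1 \<phi> t h \<le> r1" "\<forall>h>0. r2 \<le> sl1 \<phi> t h"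
      unfolding bad1_def by blast
    obtain r where "r \<in> \<rat>" "r1 < r" "r < r2" using Rats_dense_in_real[OF r(1)] by blast
    then have "P r t" unfolding P_def using r by force
    then show "t \<in> (\<Union>r\<in>\<rat>. {t. P r t})" using \<open>r \<in> \<rat>\<close> by blast
  qed
  have uniq: "s = t" if "P r s" "P r t" for r s t
  proof (rule ccontr)
    assume "s \<noteq> t"
    have key: False if "a < b" "P r a" "P r b" for a b
    proof -
      have "r < sl1 \<phi> a (b - a)" using that unfolding P_def by auto
      moreover have "sl1 \<phi> b (a - b) < r" using that unfolding P_def by auto
      moreover have "sl1 \<phi> a (b - a) = sl1 \<phi> b (a - b)"
        unfolding sl1_def using dq_swap[of "\<phi> b" "\<phi> a" b a] by simp
      ultimately show False by simp
    qed
    show False using key[of s t] key[of t s] that \<open>s \<noteq> t\<close> by (cases "s < t") auto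
  qed
  have cnt: "countable {t. P r t}" for r
  proof (cases "\<exists>t. P r t")
    case True
    then obtain t where "P r t" by blast
    then have "{t. P r t} \<subseteq> {t}" using uniq by blast
    then show ?thesis by (rule countable_subset) simp
  next
    case False
    then show ?thesis by simp
  qed
  have "countable (\<Union>r\<in>\<rat>. {t. P r t})"
    by (intro countable_UN countable_rat cnt)
  then show ?thesis using sub by (rule countable_subset[rotated])
qed

lemma not_bad1_tendsto:
  assumes cv: "convex_on UNIV \<phi>" and nb: "\<not> bad1 \<phi> t"
  shows "\<exists>L. (sl1 \<phi> t \<longlongrightarrow> L) (at 0)"
proof -
  define L where "L = Inf (sl1 \<phi> t ` {0<..})"
  have bdd: "bdd_below (sl1 \<phi> t ` {0<..})"
  proof (rule bdd_belowI)
    fix y assume "y \<in> sl1 \<phi> t ` {0<..}"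
    then obtain h where "h > 0" "y = sl1 \<phi> t h" by auto
    then show "sl1 \<phi> t (-1) \<le> y" using sl1_mono[OF cv, of "-1" h t] by simp
  qed
  have ne: "sl1 \<phi> t ` {0<..} \<noteq> {}" by auto
  have Lle: "L \<le> sl1 \<phi> t h" if "h > 0" for h
    unfolding L_def using that bdd by (intro cInf_lower) auto
  have leL: "sl1 \<phi> t h \<le> L" if "h < 0" for h
    unfolding L_def using that ne by (intro cInf_greatest) (auto intro!: sl1_mono[OF cv])
  have "\<forall>r>0. \<exists>s>0. \<forall>h. h \<noteq> 0 \<and> norm (h - 0) < s \<longrightarrow> norm (sl1 \<phi> t h - L) < r"
  proof (intro allI impI)
    fix e :: real assume e: "e > 0"
    have "Inf (sl1 \<phi> t ` {0<..}) < L + e" using e unfolding L_def by simp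
    from cInf_lessD[OF ne this] obtain y where y: "y \<in> sl1 \<phi> t ` {0<..}" "y < L + e"
      by blast
    then obtain h0 where h0: "h0 > 0" "sl1 \<phi> t h0 < L + e" by auto
    have "\<exists>h<0. L - e < sl1 \<phi> t h"
    proof (rule ccontr)
      assume "\<not> ?thesis"
      then have "\<forall>h<0. sl1 \<phi> t h \<le> L - e" using not_less by blast
      then have "bad1 \<phi> t" unfolding bad1_def using e Lle
        by (intro exI[of _ "L - e"] exI[of _ L]) auto
      then show False using nb by simp
    qed
    then obtain h1 where h1: "h1 < 0" "L - e < sl1 \<phi> t h1" by blast
    show "\<exists>s>0. \<forall>h. h \<noteq> 0 \<and> norm (h - 0) < s \<longrightarrow> norm (sl1 \<phi> t h - L) < e"
    proof (intro exI[of _ "min h0 (- h1)"] conjI allI impI)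
      show "0 < min h0 (- h1)" using h0 h1 by simp
      fix h :: real assume h: "h \<noteq> 0 \<and> norm (h - 0) < min h0 (- h1)"
      show "norm (sl1 \<phi> t h - L) < e"
      proof (cases "h > 0")
        case True
        have "sl1 \<phi> t h \<le> sl1 \<phi> t h0" using h True by (intro sl1_mono[OF cv]) auto
        then show ?thesis using Lle[OF True] h0 by simp
      next
        case False
        then have "h < 0" using h by simp
        have "sl1 \<phi> t h1 \<le> sl1 \<phi> t h" using h \<open>h < 0\<close> h1 by (intro sl1_mono[OF cv]) auto
        then show ?thesis using leL[OF \<open>h < 0\<close>] h1 by simp
      qed
    qed
  qed
  then have "(sl1 \<phi> t \<longlongrightarrow> L) (at 0)" by (simp only: LIM_eq)
  then show ?thesis by blast
qed



lemma conv_line: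
  assumes cv: "convex_on UNIV (f :: 'a::real_vector \<Rightarrow> real)"
  shows "convex_on UNIV (\<lambda>s. f (x + s *\<^sub>R v))"
  unfolding convex_on_def
proof (intro conjI ballI allI impI)
  fix a b u w :: real assume uw: "0 \<le> u" "0 \<le> w" "u + w = 1"
  have "x + (u *\<^sub>R a + w *\<^sub>R b) *\<^sub>R v = u *\<^sub>R (x + a *\<^sub>R v) + w *\<^sub>R (x + b *\<^sub>R v)"
  proof -
    have "x = u *\<^sub>R x + w *\<^sub>R x" using uw(3) by (metis scaleR_add_left scaleR_one)
    then show ?thesis by (simp add: algebra_simps)
  qed
  then show "f (x + (u *\<^sub>R a + w *\<^sub>R b) *\<^sub>R v) \<le> u * f (x + a *\<^sub>R v) + w * f (x + b *\<^sub>R v)"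
    using cv uw unfolding convex_on_def by simp
qed simp

definition badn :: "('a::real_vector \<Rightarrow> real) \<Rightarrow> 'a \<Rightarrow> 'a \<Rightarrow> bool" where
  "badn f v x \<longleftrightarrow> bad1 (\<lambda>s. f (x + s *\<^sub>R v)) 0"

lemma badn_shift: "badn f v (x + t *\<^sub>R v) \<longleftrightarrow> bad1 (\<lambda>s. f (x + s *\<^sub>R v)) t"
proof -
  have "sl1 (\<lambda>s. f (x + t *\<^sub>R v + s *\<^sub>R v)) 0 = sl1 (\<lambda>s. f (x + s *\<^sub>R v)) t"
    by (rule ext) (simp add: sl1_def scaleR_add_left add.assoc)
  then show ?thesis unfolding badn_def bad1_def by simp
qed

lemma badn_alt:
  "badn f v x \<longleftrightarrow> (\<exists>q1 q2 :: rat. of_rat q1 < (of_rat q2 :: real) \<and>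
      (\<forall>h<0. (f (x + h *\<^sub>R v) - f x) / h \<le> of_rat q1) \<and> (\<forall>h>0. of_rat q2 \<le> (f (x + h *\<^sub>R v) - f x) / h))"
proof
  assume "badn f v x"
  then obtain r1 r2 where r: "r1 < r2" "\<forall>h<0. (f (x + h *\<^sub>R v) - f x) / h \<le> r1"
     "\<forall>h>0. r2 \<le> (f (x + h *\<^sub>R v) - f x) / h"
    unfolding badn_def bad1_def sl1_def by auto
  obtain a where a: "a \<in> \<rat>" "r1 < a" "a < (r1 + r2) / 2" using Rats_dense_in_real[of r1 "(r1+r2)/2"] r(1) by auto
  obtain b where b: "b \<in> \<rat>" "(r1 + r2) / 2 < b" "b < r2" using Rats_dense_in_real[of "(r1+r2)/2" r2] r(1) by auto
  obtain q1 where q1: "a = of_rat q1" using a(1) Rats_cases by blast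
  obtain q2 where q2: "b = of_rat q2" using b(1) Rats_cases by blast
  show "\<exists>q1 q2 :: rat. of_rat q1 < (of_rat q2 :: real) \<and>
      (\<forall>h<0. (f (x + h *\<^sub>R v) - f x) / h \<le> of_rat q1) \<and> (\<forall>h>0. of_rat q2 \<le> (f (x + h *\<^sub>R v) - f x) / h)"
  proof (intro exI conjI allI impI)
    show "(of_rat q1::real) < of_rat q2" using a b q1 q2 by simp
    fix h :: real
    show "h < 0 \<Longrightarrow> (f (x + h *\<^sub>R v) - f x) / h \<le> of_rat q1" using r(2) a q1 by force
    show "0 < h \<Longrightarrow> of_rat q2 \<le> (f (x + h *\<^sub>R v) - f x) / h" using r(3) b q2 by force
  qed
next
  assume "\<exists>q1 q2 :: rat. of_rat q1 < (of_rat q2 :: real) \<and>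
      (\<forall>h<0. (f (x + h *\<^sub>R v) - f x) / h \<le> of_rat q1) \<and> (\<forall>h>0. of_rat q2 \<le> (f (x + h *\<^sub>R v) - f x) / h)"
  then show "badn f v x" unfolding badn_def bad1_def sl1_def by auto
qed

lemma badn_borel:
  fixes f :: "'a::euclidean_space \<Rightarrow> real"
  assumes cv: "convex_on UNIV f"
  shows "{x. badn f v x} \<in> sets borel"
proof -
  have cf: "continuous_on UNIV f" using convex_on_continuous[OF open_UNIV cv] .
  have cq: "continuous_on UNIV (\<lambda>x. (f (x + h *\<^sub>R v) - f x) / h)" for h
  proof -
    have "continuous_on UNIV (\<lambda>x. (f (x + h *\<^sub>R v) - f x) * inverse h)"
      by (intro continuous_intros continuous_on_compose2[OF cf]) auto
    then show ?thesis by (simp add: divide_inverse)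
  qed
  define C1 where "C1 q = {x. \<forall>h. h < 0 \<longrightarrow> (f (x + h *\<^sub>R v) - f x) / h \<le> q}" for q :: real
  define C2 where "C2 q = {x. \<forall>h. 0 < h \<longrightarrow> q \<le> (f (x + h *\<^sub>R v) - f x) / h}" for q :: real
  have c1: "closed (C1 q)" for q
  proof -
    have "C1 q = (\<Inter>h\<in>{..<0}. {x. (f (x + h *\<^sub>R v) - f x) / h \<le> q})" unfolding C1_def by auto
    also have "closed \<dots>"
      by (intro closed_INT ballI closed_Collect_le cq continuous_on_const)
    finally show ?thesis .
  qed
  have c2: "closed (C2 q)" for q
  proof -
    have "C2 q = (\<Inter>h\<in>{0<..}. {x. q \<le> (f (x + h *\<^sub>R v) - f x) / h})" unfolding C2_def by auto
    also have "closed \<dots>"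
      by (intro closed_INT ballI closed_Collect_le cq continuous_on_const)
    finally show ?thesis .
  qed
  define A where "A q1 q2 = (if (of_rat q1 :: real) < of_rat q2 then C1 (of_rat q1) \<inter> C2 (of_rat q2) else {})" for q1 q2 :: rat
  have "{x. badn f v x} = (\<Union>q1. \<Union>q2. A q1 q2)"
    unfolding badn_alt A_def C1_def C2_def by auto
  also have "\<dots> \<in> sets borel"
  proof -
    have Ab: "A q1 q2 \<in> sets borel" for q1 q2
      unfolding A_def using c1 c2 by (auto intro!: borel_closed)
    then have "(\<Union>q2. A q1 q2) \<in> sets borel" for q1 by (intro sets.countable_UN) auto
    then show ?thesis by (intro sets.countable_UN) auto
  qed
  finally show ?thesis .
qed

lemma badn_null:
  fixes f :: "'a::euclidean_space \<Rightarrow> real"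
  assumes cv: "convex_on UNIV f"
  shows "{x. badn f v x} \<in> null_sets lborel"
proof (rule null_by_lines[OF badn_borel[OF cv]])
  fix x
  have "{t::real. x + t *\<^sub>R v \<in> {x. badn f v x}} = {t. bad1 (\<lambda>s. f (x + s *\<^sub>R v)) t}"
    using badn_shift by auto
  moreover have "countable {t. bad1 (\<lambda>s. f (x + s *\<^sub>R v)) t}"
    by (rule countable_bad1[OF conv_line[OF cv]])
  ultimately show "{t::real. x + t *\<^sub>R v \<in> {x. badn f v x}} \<in> null_sets lborel"
    by (simp add: countable_imp_null_set_lborel)
qed



lemma convex_upper_sum:
  fixes f :: "'a::euclidean_space \<Rightarrow> real"
  assumes cv: "convex_on UNIV f"
  shows "f (x + z) \<le> (\<Sum>b\<in>Basis. (1 / real DIM('a)) * f (x + (real DIM('a) * (z \<bullet> b)) *\<^sub>R b))"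
proof -
  define N where "N = real DIM('a)"
  have N: "N > 0" unfolding N_def by simp
  have "(\<Sum>b\<in>(Basis::'a set). (1 / N) *\<^sub>R (x + (N * (z \<bullet> b)) *\<^sub>R b))
      = (\<Sum>b\<in>(Basis::'a set). (1 / N) *\<^sub>R x) + (\<Sum>b\<in>(Basis::'a set). (z \<bullet> b) *\<^sub>R b)"
    using N by (simp add: scaleR_add_right sum.distrib)
  also have "\<dots> = x + z"
  proof -
    have "(\<Sum>b\<in>(Basis::'a set). (1 / N) *\<^sub>R x) = (\<Sum>b\<in>(Basis::'a set). 1 / N) *\<^sub>R x"
      by (rule scaleR_sum_left[symmetric])
    also have "\<dots> = x" using N by (simp add: N_def)
    finally show ?thesis by (simp add: euclidean_representation)
  qed
  finally have eq: "x + z = (\<Sum>b\<in>(Basis::'a set). (1 / N) *\<^sub>R (x + (N * (z \<bullet> b)) *\<^sub>R b))" by simp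
  have "f (\<Sum>b\<in>(Basis::'a set). (1 / N) *\<^sub>R (x + (N * (z \<bullet> b)) *\<^sub>R b))
      \<le> (\<Sum>b\<in>Basis. (1 / N) * f (x + (N * (z \<bullet> b)) *\<^sub>R b))"
    by (rule convex_on_sum[OF finite_Basis _ cv]) (use N in \<open>auto simp: N_def\<close>)
  then show ?thesis using eq unfolding N_def by simp
qed

lemma diff_from_partials:
  fixes f :: "'a::euclidean_space \<Rightarrow> real"
  assumes cv: "convex_on UNIV f"
    and lim: "\<And>b. b \<in> Basis \<Longrightarrow> ((\<lambda>h. (f (x + h *\<^sub>R b) - f x) / h) \<longlongrightarrow> d b) (at 0)"
  shows "f differentiable (at x)"
proof -
  define N where "N = real DIM('a)"
  have N: "N > 0" unfolding N_def by simp
  define D where "D z = (\<Sum>b\<in>Basis. (z \<bullet> b) * d b)" for z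
  define R where "R b h = f (x + h *\<^sub>R b) - f x - h * d b" for b h
  have bl: "bounded_linear D"
    unfolding D_def by (intro bounded_linear_intros)
  have Dneg: "D (- z) = - D z" for z unfolding D_def by (simp add: sum_negf)
  have Rev: "\<forall>\<^sub>F h in nhds 0. \<bar>R b h\<bar> \<le> e * \<bar>h\<bar>" if b: "b \<in> Basis" and e: "e > 0" for b e
  proof -
    have "\<forall>\<^sub>F h in at 0. dist ((f (x + h *\<^sub>R b) - f x) / h) (d b) < e"
      using lim[OF b] e by (rule tendstoD)
    then obtain dl where dl: "dl > 0" "\<And>h. h \<noteq> 0 \<Longrightarrow> dist h 0 < dl \<Longrightarrow>
        dist ((f (x + h *\<^sub>R b) - f x) / h) (d b) < e"
      unfolding eventually_at by blast
    have "\<bar>R b h\<bar> \<le> e * \<bar>h\<bar>" if h: "dist h 0 < dl" for h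
    proof (cases "h = 0")
      case True then show ?thesis by (simp add: R_def)
    next
      case False
      have "\<bar>(f (x + h *\<^sub>R b) - f x) / h - d b\<bar> < e" using dl(2)[OF False h] by (simp add: dist_real_def)
      moreover have "R b h = h * ((f (x + h *\<^sub>R b) - f x) / h - d b)"
        using False by (simp add: R_def field_simps)
      ultimately have "\<bar>h\<bar> * \<bar>(f (x + h *\<^sub>R b) - f x) / h - d b\<bar> \<le> \<bar>h\<bar> * e"
        and "R b h = h * ((f (x + h *\<^sub>R b) - f x) / h - d b)"
        by (auto intro: mult_left_mono)
      then show ?thesis by (simp add: abs_mult mult.commute)
    qed
    then show ?thesis unfolding eventually_nhds_metric using dl(1) by blast
  qed
  have main: "\<forall>e>0. \<exists>dd>0. \<forall>y. norm (y - x) < dd \<longrightarrow> norm (f y - f x - D (y - x)) \<le> e * norm (y - x)"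
  proof (intro allI impI)
    fix e :: real assume e: "e > 0"
    define e' where "e' = e / N"
    have e': "e' > 0" unfolding e'_def using e N by simp
    have ev1: "\<forall>\<^sub>F z in nhds (0::'a). \<forall>b\<in>Basis. \<bar>R b (N * (z \<bullet> b))\<bar> \<le> e' * \<bar>N * (z \<bullet> b)\<bar>
                 \<and> \<bar>R b (N * ((- z) \<bullet> b))\<bar> \<le> e' * \<bar>N * ((- z) \<bullet> b)\<bar>"
    proof (rule eventually_ball_finite[OF finite_Basis], rule ballI, rule eventually_conj)
      fix b :: 'a assume b: "b \<in> Basis"
      have t1: "filterlim (\<lambda>z::'a. N * (z \<bullet> b)) (nhds 0) (nhds 0)"
      proof -
        have "((\<lambda>z::'a. N * (z \<bullet> b)) \<longlongrightarrow> N * (0 \<bullet> b)) (nhds 0)"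
          by (intro tendsto_intros filterlim_ident)
        then show ?thesis by simp
      qed
      have t2: "filterlim (\<lambda>z::'a. N * ((- z) \<bullet> b)) (nhds 0) (nhds 0)"
      proof -
        have "((\<lambda>z::'a. N * ((- z) \<bullet> b)) \<longlongrightarrow> N * ((- 0) \<bullet> b)) (nhds 0)"
          by (intro tendsto_intros filterlim_ident)
        then show ?thesis by simp
      qed
      show "\<forall>\<^sub>F z in nhds (0::'a). \<bar>R b (N * (z \<bullet> b))\<bar> \<le> e' * \<bar>N * (z \<bullet> b)\<bar>"
        using t1 Rev[OF b e'] unfolding filterlim_iff by blast
      show "\<forall>\<^sub>F z in nhds (0::'a). \<bar>R b (N * ((- z) \<bullet> b))\<bar> \<le> e' * \<bar>N * ((- z) \<bullet> b)\<bar>"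
        using t2 Rev[OF b e'] unfolding filterlim_iff by blast
    qed
    then obtain dd where dd: "dd > 0" "\<And>z. dist z 0 < dd \<Longrightarrow> (\<forall>b\<in>Basis. \<bar>R b (N * (z \<bullet> b))\<bar> \<le> e' * \<bar>N * (z \<bullet> b)\<bar>
                 \<and> \<bar>R b (N * ((- z) \<bullet> b))\<bar> \<le> e' * \<bar>N * ((- z) \<bullet> b)\<bar>)"
      unfolding eventually_nhds_metric by blast
    have up: "f (x + z) - f x - D z \<le> e * norm z" if z: "\<forall>b\<in>Basis. \<bar>R b (N * (z \<bullet> b))\<bar> \<le> e' * \<bar>N * (z \<bullet> b)\<bar>" for z
    proof -
      have "f (x + z) \<le> (\<Sum>b\<in>Basis. (1 / N) * f (x + (N * (z \<bullet> b)) *\<^sub>R b))"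
        using convex_upper_sum[OF cv] unfolding N_def by blast
      also have "\<dots> = (\<Sum>b\<in>Basis. (1 / N) * R b (N * (z \<bullet> b)) + (1 / N) * f x + (z \<bullet> b) * d b)"
        using N by (intro sum.cong refl) (simp add: R_def field_simps)
      also have "\<dots> = (\<Sum>b\<in>Basis. (1 / N) * R b (N * (z \<bullet> b))) + f x + D z"
        using N by (simp add: sum.distrib D_def N_def)
      finally have "f (x + z) - f x - D z \<le> (\<Sum>b\<in>Basis. (1 / N) * R b (N * (z \<bullet> b)))" by simp
      also have "\<dots> \<le> (\<Sum>b\<in>(Basis::'a set). e' * norm z)"
      proof (rule sum_mono)
        fix b :: 'a assume b: "b \<in> Basis"
        have "(1 / N) * R b (N * (z \<bullet> b)) \<le> (1 / N) * (e' * \<bar>N * (z \<bullet> b)\<bar>)"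
          using z b N by (intro mult_left_mono) auto
        also have "\<dots> = e' * \<bar>z \<bullet> b\<bar>" using N by (simp add: abs_mult)
        also have "\<dots> \<le> e' * norm z" using e' b by (intro mult_left_mono Basis_le_norm) auto
        finally show "(1 / N) * R b (N * (z \<bullet> b)) \<le> e' * norm z" .
      qed
      also have "\<dots> = e * norm z" using N by (simp add: e'_def N_def)
      finally show ?thesis .
    qed
    show "\<exists>dd>0. \<forall>y. norm (y - x) < dd \<longrightarrow> norm (f y - f x - D (y - x)) \<le> e * norm (y - x)"
    proof (intro exI[of _ dd] conjI allI impI)
      show "dd > 0" by fact
      fix y assume y: "norm (y - x) < dd"
      define z where "z = y - x"
      have zz: "\<forall>b\<in>Basis. \<bar>R b (N * (z \<bullet> b))\<bar> \<le> e' * \<bar>N * (z \<bullet> b)\<bar>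
                 \<and> \<bar>R b (N * ((- z) \<bullet> b))\<bar> \<le> e' * \<bar>N * ((- z) \<bullet> b)\<bar>"
        using dd(2)[of z] y by (simp add: z_def dist_norm)
      have u1: "f (x + z) - f x - D z \<le> e * norm z" using up[of z] zz by blast
      have "f (x + - z) - f x - D (- z) \<le> e * norm (- z)" using up[of "- z"] zz by blast
      then have u2: "f (x + - z) - f x + D z \<le> e * norm z" unfolding Dneg norm_minus_cancel by simp
      have mid: "f x \<le> (1/2) * f (x + z) + (1/2) * f (x + - z)"
      proof -
        have c: "f ((1 - 1/2) *\<^sub>R (x + z) + (1/2) *\<^sub>R (x + - z)) \<le> (1 - 1/2) * f (x + z) + (1/2) * f (x + - z)"
          by (rule convex_onD[OF cv]) auto
        have h: "(1 - 1/2::real) = 1/2" by simp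
        have "(1/2) *\<^sub>R (x + z) + (1/2) *\<^sub>R (x + - z) = (1/2::real) *\<^sub>R ((x + z) + (x + - z))"
          by (rule scaleR_add_right[symmetric])
        also have "(x + z) + (x + - z) = (2::real) *\<^sub>R x" by (simp add: scaleR_2)
        also have "(1/2::real) *\<^sub>R ((2::real) *\<^sub>R x) = x" by simp
        finally have "(1/2) *\<^sub>R (x + z) + (1/2) *\<^sub>R (x + - z) = x" .
        then show ?thesis using c unfolding h by simp
      qed
      have "- (e * norm z) \<le> f (x + z) - f x - D z" using u2 mid by linarith
      then have "\<bar>f (x + z) - f x - D z\<bar> \<le> e * norm z" using u1 by (simp only: abs_le_iff) simp
      moreover have "y = x + z" unfolding z_def by simp
      ultimately show "norm (f y - f x - D (y - x)) \<le> e * norm (y - x)"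
        unfolding z_def by simp
    qed
  qed
  have "(f has_derivative D) (at x)"
    unfolding has_derivative_at_alt using bl main by blast
  then show ?thesis unfolding differentiable_def by blast
qed

theorem convex_ae_differentiable:
  fixes f :: "'a::euclidean_space \<Rightarrow> real"
  assumes cv: "convex_on UNIV f"
  shows "AE x in lborel. f differentiable (at x)"
proof (rule AE_I')
  show "(\<Union>b\<in>Basis. {x. badn f b x}) \<in> null_sets lborel"
    using badn_null[OF cv] countable_finite[OF finite_Basis] by (intro null_sets_UN') auto
  show "{x \<in> space lborel. \<not> f differentiable (at x)} \<subseteq> (\<Union>b\<in>Basis. {x. badn f b x})"
  proof (rule subsetI, rule ccontr)
    fix x assume x: "x \<in> {x \<in> space lborel. \<not> f differentiable (at x)}"
      and nb: "x \<notin> (\<Union>b\<in>Basis. {x. badn f b x})"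
    have "\<exists>L. ((\<lambda>h. (f (x + h *\<^sub>R b) - f x) / h) \<longlongrightarrow> L) (at 0)" if b: "b \<in> Basis" for b
    proof -
      have "\<not> bad1 (\<lambda>s. f (x + s *\<^sub>R b)) 0" using nb b unfolding badn_def by blast
      from not_bad1_tendsto[OF conv_line[OF cv] this]
      obtain L where "(sl1 (\<lambda>s. f (x + s *\<^sub>R b)) 0 \<longlongrightarrow> L) (at 0)" by blast
      moreover have "sl1 (\<lambda>s. f (x + s *\<^sub>R b)) 0 = (\<lambda>h. (f (x + h *\<^sub>R b) - f x) / h)"
        by (rule ext) (simp add: sl1_def)
      ultimately show ?thesis by auto
    qed
    then obtain d where "\<And>b. b \<in> Basis \<Longrightarrow> ((\<lambda>h. (f (x + h *\<^sub>R b) - f x) / h) \<longlongrightarrow> d b) (at 0)"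
      by metis
    then have "f differentiable (at x)" by (rule diff_from_partials[OF cv])
    then show False using x by simp
  qed
qed



definition cc :: "('a::real_vector \<Rightarrow> real) \<Rightarrow> bool" where
  "cc F \<longleftrightarrow> (\<forall>x y u. 0 \<le> u \<and> u \<le> 1 \<longrightarrow> u * F x + (1 - u) * F y \<le> F (u *\<^sub>R x + (1 - u) *\<^sub>R y))"

definition lin :: "('a::real_vector \<Rightarrow> real) \<Rightarrow> bool" where
  "lin F \<longleftrightarrow> (\<forall>x y u. F (u *\<^sub>R x + (1 - u) *\<^sub>R y) = u * F x + (1 - u) * F y)"

lemma lin_cc: "lin F \<Longrightarrow> cc F"
  unfolding lin_def cc_def by simp

lemma lin_const: "lin (\<lambda>x. a)"
  unfolding lin_def by (simp add: algebra_simps)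

lemma lin_add: "lin F \<Longrightarrow> lin G \<Longrightarrow> lin (\<lambda>x. F x + G x)"
  unfolding lin_def by (simp add: distrib_left)

lemma lin_cmult: "lin F \<Longrightarrow> lin (\<lambda>x. a * F x)"
  unfolding lin_def by (simp add: distrib_left mult.left_commute)

lemma lin_multc: "lin F \<Longrightarrow> lin (\<lambda>x. F x * a)"
  unfolding lin_def by (simp add: distrib_right mult.assoc)

lemma lin_sum: "finite S \<Longrightarrow> (\<And>i. i \<in> S \<Longrightarrow> lin (F i)) \<Longrightarrow> lin (\<lambda>x. \<Sum>i\<in>S. F i x)"
  by (induction S rule: finite_induct) (auto intro: lin_add lin_const)

lemma cc_add: "cc F \<Longrightarrow> cc G \<Longrightarrow> cc (\<lambda>x. F x + G x)"
  unfolding cc_def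
proof (intro allI impI)
  fix x y :: 'a and u :: real
  assume F: "\<forall>x y u. 0 \<le> u \<and> u \<le> 1 \<longrightarrow> u * F x + (1 - u) * F y \<le> F (u *\<^sub>R x + (1 - u) *\<^sub>R y)"
    and G: "\<forall>x y u. 0 \<le> u \<and> u \<le> 1 \<longrightarrow> u * G x + (1 - u) * G y \<le> G (u *\<^sub>R x + (1 - u) *\<^sub>R y)"
    and u: "0 \<le> u \<and> u \<le> 1"
  from F u have "u * F x + (1 - u) * F y \<le> F (u *\<^sub>R x + (1 - u) *\<^sub>R y)" by blast
  moreover from G u have "u * G x + (1 - u) * G y \<le> G (u *\<^sub>R x + (1 - u) *\<^sub>R y)" by blast
  ultimately show "u * (F x + G x) + (1 - u) * (F y + G y) \<le> F (u *\<^sub>R x + (1 - u) *\<^sub>R y) + G (u *\<^sub>R x + (1 - u) *\<^sub>R y)"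
    by (simp add: algebra_simps)
qed

lemma cc_nnmult: assumes "cc F" "0 \<le> a" shows "cc (\<lambda>x. F x * a)"
  unfolding cc_def
proof (intro allI impI)
  fix x y :: 'a and u :: real
  assume u: "0 \<le> u \<and> u \<le> 1"
  with assms(1) have "u * F x + (1 - u) * F y \<le> F (u *\<^sub>R x + (1 - u) *\<^sub>R y)" unfolding cc_def by blast
  then have "(u * F x + (1 - u) * F y) * a \<le> F (u *\<^sub>R x + (1 - u) *\<^sub>R y) * a"
    using assms(2) by (rule mult_right_mono)
  then show "u * (F x * a) + (1 - u) * (F y * a) \<le> F (u *\<^sub>R x + (1 - u) *\<^sub>R y) * a"
    by (simp add: algebra_simps)
qed

lemma cc_sum: "finite S \<Longrightarrow> (\<And>i. i \<in> S \<Longrightarrow> cc (F i)) \<Longrightarrow> cc (\<lambda>x. \<Sum>i\<in>S. F i x)"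
proof (induction S rule: finite_induct)
  case empty
  then show ?case using lin_cc[OF lin_const[of 0]] by simp
next
  case (insert a S)
  then show ?case by (simp add: cc_add)
qed

lemma cc_Min_range:
  fixes F :: "'i::finite \<Rightarrow> 'a::real_vector \<Rightarrow> real"
  assumes "\<And>i. cc (F i)"
  shows "cc (\<lambda>x. Min (range (\<lambda>i. F i x)))"
  unfolding cc_def
proof (intro allI impI)
  fix x y :: 'a and u :: real
  assume u: "0 \<le> u \<and> u \<le> 1"
  define z where "z = u *\<^sub>R x + (1 - u) *\<^sub>R y"
  have "Min (range (\<lambda>i. F i z)) \<in> range (\<lambda>i. F i z)" by (rule Min_in) auto
  then obtain i where i: "Min (range (\<lambda>i. F i z)) = F i z" by blast
  have "u * F i x + (1 - u) * F i y \<le> F i z" using assms[of i] u unfolding cc_def z_def by blast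
  moreover have "u * Min (range (\<lambda>i. F i x)) \<le> u * F i x" using u by (intro mult_left_mono) auto
  moreover have "(1 - u) * Min (range (\<lambda>i. F i y)) \<le> (1 - u) * F i y" using u by (intro mult_left_mono) auto
  ultimately show "u * Min (range (\<lambda>i. F i x)) + (1 - u) * Min (range (\<lambda>i. F i y)) \<le> Min (range (\<lambda>i. F i (u *\<^sub>R x + (1 - u) *\<^sub>R y)))"
    using i unfolding z_def by linarith
qed

lemma cc_min:
  assumes "cc F" "cc G"
  shows "cc (\<lambda>x. min (F x) (G x))"
  unfolding cc_def
proof (intro allI impI)
  fix x y :: 'a and u :: real
  assume u: "0 \<le> u \<and> u \<le> 1"
  have a: "u * min (F x) (G x) \<le> u * F x" "u * min (F x) (G x) \<le> u * G x" using u by (auto intro: mult_left_mono)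
  have b: "(1 - u) * min (F y) (G y) \<le> (1 - u) * F y" "(1 - u) * min (F y) (G y) \<le> (1 - u) * G y" using u by (auto intro: mult_left_mono)
  have "u * F x + (1 - u) * F y \<le> F (u *\<^sub>R x + (1 - u) *\<^sub>R y)" using assms(1) u unfolding cc_def by blast
  moreover have "u * G x + (1 - u) * G y \<le> G (u *\<^sub>R x + (1 - u) *\<^sub>R y)" using assms(2) u unfolding cc_def by blast
  ultimately show "u * min (F x) (G x) + (1 - u) * min (F y) (G y) \<le> min (F (u *\<^sub>R x + (1 - u) *\<^sub>R y)) (G (u *\<^sub>R x + (1 - u) *\<^sub>R y))"
    using a b by linarith
qed

lemma cc_lim:
  assumes "\<And>k. cc (F k)" "\<And>x. (\<lambda>k. F k x) \<longlonglongrightarrow> G x"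
  shows "cc G"
  unfolding cc_def
proof (intro allI impI)
  fix x y :: 'a and u :: real
  assume u: "0 \<le> u \<and> u \<le> 1"
  have l1: "(\<lambda>k. u * F k x + (1 - u) * F k y) \<longlonglongrightarrow> u * G x + (1 - u) * G y"
    by (intro tendsto_intros assms(2))
  have l2: "(\<lambda>k. F k (u *\<^sub>R x + (1 - u) *\<^sub>R y)) \<longlonglongrightarrow> G (u *\<^sub>R x + (1 - u) *\<^sub>R y)"
    by (rule assms(2))
  show "u * G x + (1 - u) * G y \<le> G (u *\<^sub>R x + (1 - u) *\<^sub>R y)"
    using u assms(1) unfolding cc_def
    by (intro tendsto_le[OF trivial_limit_sequentially l2 l1]) auto
qed

lemma cc_convex:
  assumes "cc F"
  shows "convex_on UNIV (\<lambda>x. - F x)"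
proof (rule convex_onI)
  fix t :: real and x y :: 'a
  assume t: "0 < t" "t < 1"
  have "(1 - t) * F x + (1 - (1 - t)) * F y \<le> F ((1 - t) *\<^sub>R x + (1 - (1 - t)) *\<^sub>R y)"
  proof -
    have "0 \<le> 1 - t \<and> 1 - t \<le> 1" using t by simp
    then show ?thesis using assms unfolding cc_def by blast
  qed
  then show "- F ((1 - t) *\<^sub>R x + t *\<^sub>R y) \<le> (1 - t) * - F x + t * - F y" by simp
qed simp

lemma lin_eta_a: "lin (\<lambda>\<eta>. eta_a \<eta> th)"
  unfolding lin_def eta_a_def by simp
lemma lin_eta_b: "lin (\<lambda>\<eta>. eta_b \<eta> th)"
  unfolding lin_def eta_b_def by simp
lemma lin_eta_c: "lin (\<lambda>\<eta>. eta_c \<eta> l)"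
  unfolding lin_def eta_c_def by simp

lemma lin_V0: "lin (\<lambda>\<eta>. V0 \<eta> \<mu>)"
  unfolding V0_def by (intro lin_sum lin_multc lin_eta_b) auto

lemma lin_Qbar: "lin (\<lambda>\<eta>. Qbar \<eta> thh \<mu> \<nu>)"
  unfolding Qbar_def
  by (intro lin_add lin_cmult lin_sum lin_multc lin_eta_b lin_eta_a) auto



lemma min_lip_real: "\<bar>(m::real) - m'\<bar> \<le> e \<Longrightarrow> \<bar>min a m - min a m'\<bar> \<le> e"
  by (auto simp: min_def abs_le_iff)

lemma minmin_lip:
  fixes B B' :: "'i::finite \<Rightarrow> real"
  assumes "\<And>l. \<bar>B l - B' l\<bar> \<le> e"
  shows "\<bar>min a (Min (range B)) - min a (Min (range B'))\<bar> \<le> e"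
proof -
  have "Min (range B') \<in> range B'" by (rule Min_in) auto
  then obtain l' where l': "Min (range B') = B' l'" by blast
  have "Min (range B) \<in> range B" by (rule Min_in) auto
  then obtain l where l: "Min (range B) = B l" by blast
  have "Min (range B) \<le> B l'" by (rule Min_le) auto
  moreover have "Min (range B') \<le> B' l" by (rule Min_le) auto
  ultimately have "\<bar>Min (range B) - Min (range B')\<bar> \<le> e"
    using assms[of l] assms[of l'] l l' by (simp add: abs_le_iff)
  then show ?thesis by (rule min_lip_real)
qed

lemma minmin_bound:
  fixes A :: "'i::finite \<Rightarrow> real" and B :: "'j::finite \<Rightarrow> real"
  assumes "\<And>i. \<bar>A i\<bar> \<le> K" "\<And>l. \<bar>B l\<bar> \<le> K"
  shows "\<bar>min (Min (range A)) (Min (range B))\<bar> \<le> K"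
proof -
  have "Min (range A) \<in> range A" by (rule Min_in) auto
  then obtain i where i: "Min (range A) = A i" by blast
  have "Min (range B) \<in> range B" by (rule Min_in) auto
  then obtain l where l: "Min (range B) = B l" by blast
  show ?thesis using assms(1)[of i] assms(2)[of l] i l by (simp add: min_def)
qed

lemma geom_le0:
  fixes g a M :: real
  assumes g: "0 \<le> g" "g < 1" and le: "\<And>k. a \<le> g ^ k * M"
  shows "a \<le> 0"
proof -
  have "(\<lambda>k. g ^ k * M) \<longlonglongrightarrow> 0 * M"
    by (intro tendsto_intros LIMSEQ_power_zero) (use g in auto)
  then have l: "(\<lambda>k. g ^ k * M) \<longlonglongrightarrow> 0" by simp
  show ?thesis
    by (rule tendsto_le[OF trivial_limit_sequentially l tendsto_const]) (use le in auto)
qed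

lemma dist_bounds: "is_dist \<mu> \<Longrightarrow> 0 \<le> \<mu> th \<and> \<mu> th \<le> 1"
proof -
  assume d: "is_dist \<mu>"
  then have "\<mu> th \<le> (\<Sum>x\<in>UNIV. \<mu> x)" by (intro member_le_sum) (auto simp: is_dist_def)
  then show ?thesis using d by (auto simp: is_dist_def)
qed

locale mdp =
  fixes p :: "'th::finite \<Rightarrow> 'la::finite \<Rightarrow> real"
    and q :: "'th \<Rightarrow> 'la \<Rightarrow> 'om::finite \<Rightarrow> real"
    and c :: "'la \<Rightarrow> real"
  assumes q_dist: "\<And>th l. is_dist (q th l)"
    and p_range: "\<And>th l. 0 < p th l \<and> p th l < 1"
begin

definition pmin :: real where "pmin = Min (range (\<lambda>z. p (fst z) (snd z)))"
definition gam :: real where "gam = 1 - pmin"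

lemma pmin_le: "pmin \<le> p th l"
  unfolding pmin_def by (rule Min_le) (auto intro!: image_eqI[of _ _ "(th, l)"])

lemma pmin_pos: "0 < pmin"
proof -
  have "pmin \<in> range (\<lambda>z. p (fst z) (snd z))" unfolding pmin_def by (rule Min_in) auto
  then show ?thesis using p_range by auto
qed

lemma gam: "0 \<le> gam" "gam < 1" "1 - p th l \<le> gam"
proof -
  show "gam < 1" unfolding gam_def using pmin_pos by simp
  show "0 \<le> gam" unfolding gam_def using pmin_le[of th l] p_range[of th l] by simp
  show "1 - p th l \<le> gam" unfolding gam_def using pmin_le[of th l] by simp
qed

definition wt :: "'la \<Rightarrow> ('th \<Rightarrow> real) \<Rightarrow> 'om \<Rightarrow> real" where
  "wt l \<mu> w = (\<Sum>th\<in>UNIV. (1 - p th l) * q th l w * \<mu> th)"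

lemma wt_nonneg: "(\<And>th. 0 \<le> \<mu> th) \<Longrightarrow> 0 \<le> wt l \<mu> w"
  unfolding wt_def using p_range q_dist
  by (intro sum_nonneg mult_nonneg_nonneg) (auto simp: is_dist_def less_imp_le)

lemma wt_sum: assumes "is_dist \<mu>" shows "(\<Sum>w\<in>UNIV. wt l \<mu> w) \<le> gam"
proof -
  have "(\<Sum>w\<in>UNIV. wt l \<mu> w) = (\<Sum>th\<in>UNIV. \<Sum>w\<in>UNIV. ((1 - p th l) * \<mu> th) * q th l w)"
    unfolding wt_def by (subst sum.swap) (simp add: mult_ac)
  also have "\<dots> = (\<Sum>th\<in>UNIV. ((1 - p th l) * \<mu> th) * (\<Sum>w\<in>UNIV. q th l w))"
    by (simp add: sum_distrib_left)
  also have "\<dots> = (\<Sum>th\<in>UNIV. (1 - p th l) * \<mu> th)"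
    using q_dist by (simp add: is_dist_def)
  also have "\<dots> \<le> (\<Sum>th\<in>UNIV. gam * \<mu> th)"
    using gam(3) dist_bounds[OF assms] by (intro sum_mono mult_right_mono) auto
  also have "\<dots> = gam" using assms by (simp add: sum_distrib_left[symmetric] is_dist_def)
  finally show ?thesis .
qed

lemma Qacq_eq: "Qacq p q c \<eta> W l \<mu> 1 = eta_c \<eta> l * c l + V0 \<eta> (Mbar p l \<mu>) * (\<Sum>th\<in>UNIV. p th l * \<mu> th)
    + (\<Sum>w\<in>UNIV. W (Mupd p q l \<mu> w) * wt l \<mu> w)"
  unfolding Qacq_def wt_def by simp

lemma Qacq_diff:
  assumes W: "\<And>\<mu>. \<bar>W \<mu> - W' \<mu>\<bar> \<le> d" and d: "is_dist \<mu>"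
  shows "\<bar>Qacq p q c \<eta> W l \<mu> 1 - Qacq p q c \<eta> W' l \<mu> 1\<bar> \<le> gam * d"
proof -
  have d0: "0 \<le> d" using W[of \<mu>] by simp
  have wn: "0 \<le> wt l \<mu> w" for w using wt_nonneg dist_bounds[OF d] by blast
  have "Qacq p q c \<eta> W l \<mu> 1 - Qacq p q c \<eta> W' l \<mu> 1
      = (\<Sum>w\<in>UNIV. (W (Mupd p q l \<mu> w) - W' (Mupd p q l \<mu> w)) * wt l \<mu> w)"
    unfolding Qacq_eq by (simp add: sum_subtractf left_diff_distrib)
  also have "\<bar>\<dots>\<bar> \<le> (\<Sum>w\<in>UNIV. \<bar>(W (Mupd p q l \<mu> w) - W' (Mupd p q l \<mu> w)) * wt l \<mu> w\<bar>)"
    by (rule sum_abs)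
  also have "\<dots> \<le> (\<Sum>w\<in>UNIV. d * wt l \<mu> w)"
  proof (rule sum_mono)
    fix w
    show "\<bar>(W (Mupd p q l \<mu> w) - W' (Mupd p q l \<mu> w)) * wt l \<mu> w\<bar> \<le> d * wt l \<mu> w"
      using W wn[of w] by (simp add: abs_mult mult_right_mono)
  qed
  also have "\<dots> = d * (\<Sum>w\<in>UNIV. wt l \<mu> w)" by (simp add: sum_distrib_left)
  also have "\<dots> \<le> d * gam" using wt_sum[OF d] d0 by (rule mult_left_mono)
  finally show ?thesis by (simp add: mult.commute)
qed

definition Tb :: "('th, 'la) pref \<Rightarrow> (('th \<Rightarrow> real) \<Rightarrow> real) \<Rightarrow> ('th \<Rightarrow> real) \<Rightarrow> real" where
  "Tb \<eta> W \<mu> = (if is_dist \<mu> then bellman p q c \<eta> W \<mu> else 0)"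

lemma contr:
  assumes W: "\<And>\<mu>. \<bar>W \<mu> - W' \<mu>\<bar> \<le> d"
  shows "\<bar>Tb \<eta> W \<mu> - Tb \<eta> W' \<mu>\<bar> \<le> gam * d"
proof (cases "is_dist \<mu>")
  case True
  have "\<bar>min (Min (range (\<lambda>thh. Qbar \<eta> thh \<mu> 1))) (Min (range (\<lambda>l. Qacq p q c \<eta> W l \<mu> 1)))
      - min (Min (range (\<lambda>thh. Qbar \<eta> thh \<mu> 1))) (Min (range (\<lambda>l. Qacq p q c \<eta> W' l \<mu> 1)))\<bar> \<le> gam * d"
    by (rule minmin_lip) (rule Qacq_diff[OF W True])
  then show ?thesis unfolding Tb_def bellman_def using True by simp
next
  case False
  have "0 \<le> d" using W[of \<mu>] by simp
  then show ?thesis unfolding Tb_def using False gam(1) by simp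
qed

definition Kb :: "('th, 'la) pref \<Rightarrow> real" where
  "Kb \<eta> = (\<Sum>th\<in>UNIV. \<bar>eta_a \<eta> th\<bar>) + (\<Sum>th\<in>UNIV. \<bar>eta_b \<eta> th\<bar>) + (\<Sum>l\<in>UNIV. \<bar>eta_c \<eta> l * c l\<bar>)"

lemma Kb_parts: "(\<Sum>th\<in>UNIV. \<bar>eta_a \<eta> th\<bar>) \<le> Kb \<eta>" "(\<Sum>th\<in>UNIV. \<bar>eta_b \<eta> th\<bar>) \<le> Kb \<eta>"
  "\<bar>eta_c \<eta> l * c l\<bar> + (\<Sum>th\<in>UNIV. \<bar>eta_b \<eta> th\<bar>) \<le> Kb \<eta>" "0 \<le> Kb \<eta>"
proof -
  have a: "0 \<le> (\<Sum>th\<in>UNIV. \<bar>eta_a \<eta> th\<bar>)" "0 \<le> (\<Sum>th\<in>UNIV. \<bar>eta_b \<eta> th\<bar>)"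
    "0 \<le> (\<Sum>l\<in>UNIV. \<bar>eta_c \<eta> l * c l\<bar>)" by (auto intro: sum_nonneg)
  have b: "\<bar>eta_c \<eta> l * c l\<bar> \<le> (\<Sum>l\<in>UNIV. \<bar>eta_c \<eta> l * c l\<bar>)"
    by (rule member_le_sum) auto
  show "(\<Sum>th\<in>UNIV. \<bar>eta_a \<eta> th\<bar>) \<le> Kb \<eta>" "(\<Sum>th\<in>UNIV. \<bar>eta_b \<eta> th\<bar>) \<le> Kb \<eta>"
    "\<bar>eta_c \<eta> l * c l\<bar> + (\<Sum>th\<in>UNIV. \<bar>eta_b \<eta> th\<bar>) \<le> Kb \<eta>" "0 \<le> Kb \<eta>"
    unfolding Kb_def using a b by linarith+
qed

lemma V0_bound: assumes "\<And>th. \<bar>\<nu> th\<bar> \<le> 1" shows "\<bar>V0 \<eta> \<nu>\<bar> \<le> (\<Sum>th\<in>UNIV. \<bar>eta_b \<eta> th\<bar>)"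
proof -
  have "\<bar>V0 \<eta> \<nu>\<bar> \<le> (\<Sum>th\<in>UNIV. \<bar>eta_b \<eta> th * \<nu> th\<bar>)" unfolding V0_def by (rule sum_abs)
  also have "\<dots> \<le> (\<Sum>th\<in>UNIV. \<bar>eta_b \<eta> th\<bar>)"
  proof (rule sum_mono)
    fix th
    have "\<bar>eta_b \<eta> th\<bar> * \<bar>\<nu> th\<bar> \<le> \<bar>eta_b \<eta> th\<bar> * 1" using assms[of th] by (intro mult_left_mono) auto
    then show "\<bar>eta_b \<eta> th * \<nu> th\<bar> \<le> \<bar>eta_b \<eta> th\<bar>" by (simp add: abs_mult)
  qed
  finally show ?thesis .
qed

lemma T0_bound: "\<bar>Tb \<eta> (\<lambda>_. 0) \<mu>\<bar> \<le> Kb \<eta>"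
proof (cases "is_dist \<mu>")
  case False
  then show ?thesis unfolding Tb_def using Kb_parts(4) by simp
next
  case True
  note db = dist_bounds[OF True]
  have A: "\<bar>Qbar \<eta> thh \<mu> 1\<bar> \<le> Kb \<eta>" for thh
  proof -
    have "\<bar>Qbar \<eta> thh \<mu> 1\<bar> = \<bar>\<Sum>th\<in>UNIV - {thh}. eta_a \<eta> th * \<mu> th\<bar>" unfolding Qbar_def by simp
    also have "\<dots> \<le> (\<Sum>th\<in>UNIV - {thh}. \<bar>eta_a \<eta> th * \<mu> th\<bar>)" by (rule sum_abs)
    also have "\<dots> \<le> (\<Sum>th\<in>UNIV - {thh}. \<bar>eta_a \<eta> th\<bar>)"
    proof (rule sum_mono)
      fix th
      have "\<bar>eta_a \<eta> th\<bar> * \<bar>\<mu> th\<bar> \<le> \<bar>eta_a \<eta> th\<bar> * 1" using db[of th] by (intro mult_left_mono) auto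
      then show "\<bar>eta_a \<eta> th * \<mu> th\<bar> \<le> \<bar>eta_a \<eta> th\<bar>" by (simp add: abs_mult)
    qed
    also have "\<dots> \<le> (\<Sum>th\<in>UNIV. \<bar>eta_a \<eta> th\<bar>)" by (rule sum_mono2) auto
    also have "\<dots> \<le> Kb \<eta>" by (rule Kb_parts(1))
    finally show ?thesis .
  qed
  have B: "\<bar>Qacq p q c \<eta> (\<lambda>_. 0) l \<mu> 1\<bar> \<le> Kb \<eta>" for l
  proof -
    define S where "S = (\<Sum>th\<in>UNIV. p th l * \<mu> th)"
    have pn: "0 \<le> p th l * \<mu> th" for th using p_range[of th l] db[of th] by simp
    have S0: "0 \<le> S" unfolding S_def using pn by (intro sum_nonneg) auto
    have S1: "S \<le> 1"
    proof -
      have "S \<le> (\<Sum>th\<in>UNIV. \<mu> th)" unfolding S_def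
        using p_range db by (intro sum_mono) (auto intro: mult_left_le_one_le less_imp_le)
      then show ?thesis using True by (simp add: is_dist_def)
    qed
    have mb: "\<bar>Mbar p l \<mu> th\<bar> \<le> 1" for th
    proof -
      have le: "p th l * \<mu> th \<le> S" unfolding S_def using pn by (intro member_le_sum) auto
      show ?thesis unfolding Mbar_def S_def[symmetric] using pn[of th] le S0
        by (cases "S = 0") (auto simp: divide_le_eq_1)
    qed
    have "\<bar>V0 \<eta> (Mbar p l \<mu>) * S\<bar> \<le> \<bar>V0 \<eta> (Mbar p l \<mu>)\<bar> * 1"
      unfolding abs_mult using S0 S1 by (intro mult_left_mono) auto
    also have "\<dots> \<le> (\<Sum>th\<in>UNIV. \<bar>eta_b \<eta> th\<bar>)" using V0_bound[OF mb] by simp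
    finally have v: "\<bar>V0 \<eta> (Mbar p l \<mu>) * S\<bar> \<le> (\<Sum>th\<in>UNIV. \<bar>eta_b \<eta> th\<bar>)" .
    have "\<bar>Qacq p q c \<eta> (\<lambda>_. 0) l \<mu> 1\<bar> = \<bar>eta_c \<eta> l * c l + V0 \<eta> (Mbar p l \<mu>) * S\<bar>"
      unfolding Qacq_eq S_def by simp
    also have "\<dots> \<le> \<bar>eta_c \<eta> l * c l\<bar> + \<bar>V0 \<eta> (Mbar p l \<mu>) * S\<bar>" by (rule abs_triangle_ineq)
    also have "\<dots> \<le> Kb \<eta>" using v Kb_parts(3)[of \<eta> l] by linarith
    finally show ?thesis .
  qed
  show ?thesis unfolding Tb_def bellman_def using True
    by (simp only: if_True) (rule minmin_bound[OF A B])
qed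

end



context mdp
begin

fun VI :: "nat \<Rightarrow> ('th, 'la) pref \<Rightarrow> ('th \<Rightarrow> real) \<Rightarrow> real" where
  "VI 0 \<eta> = (\<lambda>\<mu>. 0)"
| "VI (Suc k) \<eta> = Tb \<eta> (VI k \<eta>)"

definition Cb :: "('th, 'la) pref \<Rightarrow> real" where "Cb \<eta> = Kb \<eta> / (1 - gam)"

lemma Cb: "0 \<le> Cb \<eta>" "gam * Cb \<eta> + Kb \<eta> = Cb \<eta>"
proof -
  have g: "0 < 1 - gam" using gam(2) by simp
  show "0 \<le> Cb \<eta>" unfolding Cb_def using g Kb_parts(4) by simp
  show "gam * Cb \<eta> + Kb \<eta> = Cb \<eta>" unfolding Cb_def using g by (simp add: field_simps)
qed

lemma VI_bound: "\<bar>VI k \<eta> \<mu>\<bar> \<le> Cb \<eta>"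
proof (induction k arbitrary: \<mu>)
  case 0
  then show ?case using Cb(1) by simp
next
  case (Suc k)
  have "\<bar>Tb \<eta> (VI k \<eta>) \<mu> - Tb \<eta> (\<lambda>_. 0) \<mu>\<bar> \<le> gam * Cb \<eta>"
    by (rule contr) (use Suc.IH in simp)
  moreover have "\<bar>Tb \<eta> (\<lambda>_. 0) \<mu>\<bar> \<le> Kb \<eta>" by (rule T0_bound)
  ultimately have "\<bar>Tb \<eta> (VI k \<eta>) \<mu>\<bar> \<le> gam * Cb \<eta> + Kb \<eta>" by linarith
  then show ?case using Cb(2) by simp
qed

lemma VI_cauchy: "\<bar>VI (k + m) \<eta> \<mu> - VI k \<eta> \<mu>\<bar> \<le> gam ^ k * (2 * Cb \<eta>)"
proof (induction k arbitrary: \<mu>)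
  case 0
  then show ?case using VI_bound[of m \<eta> \<mu>] Cb(1)[of \<eta>] by simp
next
  case (Suc k)
  have "\<bar>Tb \<eta> (VI (k + m) \<eta>) \<mu> - Tb \<eta> (VI k \<eta>) \<mu>\<bar> \<le> gam * (gam ^ k * (2 * Cb \<eta>))"
    by (rule contr) (rule Suc.IH)
  then show ?case by simp
qed

lemma VI_conv: "convergent (\<lambda>k. VI k \<eta> \<mu>)"
proof -
  have "Cauchy (\<lambda>k. VI k \<eta> \<mu>)"
  proof (rule metric_CauchyI)
    fix e :: real assume e: "0 < e"
    have "(\<lambda>k. gam ^ k * (2 * Cb \<eta>)) \<longlonglongrightarrow> 0 * (2 * Cb \<eta>)"
      by (intro tendsto_intros LIMSEQ_power_zero) (use gam in auto)
    then have "(\<lambda>k. gam ^ k * (2 * Cb \<eta>)) \<longlonglongrightarrow> 0" by simp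
    then have "\<forall>\<^sub>F k in sequentially. gam ^ k * (2 * Cb \<eta>) < e / 2"
      using e by (intro order_tendstoD(2)) auto
    then obtain M where M: "\<And>k. k \<ge> M \<Longrightarrow> gam ^ k * (2 * Cb \<eta>) < e / 2"
      unfolding eventually_sequentially by blast
    have cl: "\<bar>VI n \<eta> \<mu> - VI M \<eta> \<mu>\<bar> < e / 2" if "n \<ge> M" for n
    proof -
      have "\<bar>VI (M + (n - M)) \<eta> \<mu> - VI M \<eta> \<mu>\<bar> \<le> gam ^ M * (2 * Cb \<eta>)" by (rule VI_cauchy)
      then show ?thesis using that M[of M] by simp
    qed
    show "\<exists>M. \<forall>m\<ge>M. \<forall>n\<ge>M. dist (VI m \<eta> \<mu>) (VI n \<eta> \<mu>) < e"
    proof (intro exI allI impI)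
      fix m n assume mn: "M \<le> m" "M \<le> n"
      show "dist (VI m \<eta> \<mu>) (VI n \<eta> \<mu>) < e"
      proof -
        have a: "VI m \<eta> \<mu> - VI M \<eta> \<mu> < e / 2" "- (VI m \<eta> \<mu> - VI M \<eta> \<mu>) < e / 2"
          using cl[OF mn(1)] unfolding abs_less_iff by auto
        have b: "VI n \<eta> \<mu> - VI M \<eta> \<mu> < e / 2" "- (VI n \<eta> \<mu> - VI M \<eta> \<mu>) < e / 2"
          using cl[OF mn(2)] unfolding abs_less_iff by auto
        show ?thesis unfolding dist_real_def abs_less_iff using a b by linarith
      qed
    qed
  qed
  then show ?thesis by (simp add: Cauchy_convergent_iff)
qed

definition Lf :: "('th, 'la) pref \<Rightarrow> ('th \<Rightarrow> real) \<Rightarrow> real" where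
  "Lf \<eta> \<mu> = lim (\<lambda>k. VI k \<eta> \<mu>)"

lemma Lf_lim: "(\<lambda>k. VI k \<eta> \<mu>) \<longlonglongrightarrow> Lf \<eta> \<mu>"
  unfolding Lf_def using VI_conv by (simp add: convergent_LIMSEQ_iff)

lemma Lf_close: "\<bar>Lf \<eta> \<mu> - VI k \<eta> \<mu>\<bar> \<le> gam ^ k * (2 * Cb \<eta>)"
proof -
  have "(\<lambda>m. VI (m + k) \<eta> \<mu>) \<longlonglongrightarrow> Lf \<eta> \<mu>"
    using Lf_lim by (rule LIMSEQ_ignore_initial_segment)
  then have l: "(\<lambda>m. \<bar>VI (m + k) \<eta> \<mu> - VI k \<eta> \<mu>\<bar>) \<longlonglongrightarrow> \<bar>Lf \<eta> \<mu> - VI k \<eta> \<mu>\<bar>"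
    by (intro tendsto_intros)
  show ?thesis
    by (rule tendsto_le[OF trivial_limit_sequentially tendsto_const l])
       (use VI_cauchy[of k _ \<eta> \<mu>] in \<open>auto simp: add.commute\<close>)
qed

lemma Lf_bound: "\<bar>Lf \<eta> \<mu>\<bar> \<le> Cb \<eta>"
proof -
  have l: "(\<lambda>k. \<bar>VI k \<eta> \<mu>\<bar>) \<longlonglongrightarrow> \<bar>Lf \<eta> \<mu>\<bar>" by (intro tendsto_intros Lf_lim)
  show ?thesis
    by (rule tendsto_le[OF trivial_limit_sequentially tendsto_const l]) (use VI_bound in auto)
qed

lemma Lf_fix: "Tb \<eta> (Lf \<eta>) \<mu> = Lf \<eta> \<mu>"
proof -
  have "\<bar>Tb \<eta> (Lf \<eta>) \<mu> - Lf \<eta> \<mu>\<bar> \<le> gam ^ k * (4 * Cb \<eta>)" for k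
  proof -
    have a: "\<bar>Tb \<eta> (Lf \<eta>) \<mu> - Tb \<eta> (VI k \<eta>) \<mu>\<bar> \<le> gam * (gam ^ k * (2 * Cb \<eta>))"
      by (rule contr) (rule Lf_close)
    have b: "\<bar>Lf \<eta> \<mu> - VI (Suc k) \<eta> \<mu>\<bar> \<le> gam ^ Suc k * (2 * Cb \<eta>)" by (rule Lf_close)
    have c: "gam * (gam ^ k * (2 * Cb \<eta>)) \<le> gam ^ k * (2 * Cb \<eta>)"
      using gam Cb(1)[of \<eta>] by (intro mult_left_le_one_le mult_nonneg_nonneg) auto
    have e: "VI (Suc k) \<eta> \<mu> = Tb \<eta> (VI k \<eta>) \<mu>" by simp
    have g: "gam ^ Suc k * (2 * Cb \<eta>) = gam * (gam ^ k * (2 * Cb \<eta>))" by simp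
    have t1: "\<bar>Tb \<eta> (Lf \<eta>) \<mu> - Lf \<eta> \<mu>\<bar> = \<bar>(Tb \<eta> (Lf \<eta>) \<mu> - Tb \<eta> (VI k \<eta>) \<mu>) + (VI (Suc k) \<eta> \<mu> - Lf \<eta> \<mu>)\<bar>"
      unfolding e by simp
    have t2: "\<bar>(Tb \<eta> (Lf \<eta>) \<mu> - Tb \<eta> (VI k \<eta>) \<mu>) + (VI (Suc k) \<eta> \<mu> - Lf \<eta> \<mu>)\<bar> \<le> \<bar>Tb \<eta> (Lf \<eta>) \<mu> - Tb \<eta> (VI k \<eta>) \<mu>\<bar> + \<bar>VI (Suc k) \<eta> \<mu> - Lf \<eta> \<mu>\<bar>"
      by (rule abs_triangle_ineq)
    have t3: "\<bar>VI (Suc k) \<eta> \<mu> - Lf \<eta> \<mu>\<bar> = \<bar>Lf \<eta> \<mu> - VI (Suc k) \<eta> \<mu>\<bar>"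
      by (rule abs_minus_commute)
    have "\<bar>Tb \<eta> (Lf \<eta>) \<mu> - Lf \<eta> \<mu>\<bar> \<le> gam ^ k * (2 * Cb \<eta>) + gam ^ k * (2 * Cb \<eta>)"
      using a b c t1 t2 t3 unfolding g by linarith
    then show ?thesis by (simp add: mult_ac)
  qed
  then have "\<bar>Tb \<eta> (Lf \<eta>) \<mu> - Lf \<eta> \<mu>\<bar> \<le> 0" by (intro geom_le0[OF gam(1,2)])
  then show ?thesis by simp
qed

lemma Vstar_eq: "Vstar1 p q c \<eta> = Lf \<eta>"
  unfolding Vstar1_def
proof (rule the_equality)
  show "(\<forall>\<mu>. is_dist \<mu> \<longrightarrow> Lf \<eta> \<mu> = bellman p q c \<eta> (Lf \<eta>) \<mu>) \<and> (\<forall>\<mu>. \<not> is_dist \<mu> \<longrightarrow> Lf \<eta> \<mu> = 0)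
      \<and> (\<exists>B. \<forall>\<mu>. \<bar>Lf \<eta> \<mu>\<bar> \<le> B)"
    using Lf_fix[of \<eta>] Lf_bound[of \<eta>] unfolding Tb_def by (metis (full_types))
next
  fix W assume W: "(\<forall>\<mu>. is_dist \<mu> \<longrightarrow> W \<mu> = bellman p q c \<eta> W \<mu>) \<and> (\<forall>\<mu>. \<not> is_dist \<mu> \<longrightarrow> W \<mu> = 0)
      \<and> (\<exists>B. \<forall>\<mu>. \<bar>W \<mu>\<bar> \<le> B)"
  then obtain B where B: "\<And>\<mu>. \<bar>W \<mu>\<bar> \<le> B" by blast
  have WT: "W \<mu> = Tb \<eta> W \<mu>" for \<mu> using W unfolding Tb_def by (cases "is_dist \<mu>") auto
  have "\<bar>W \<mu> - Lf \<eta> \<mu>\<bar> \<le> gam ^ k * (B + Cb \<eta>)" for k \<mu>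
  proof (induction k arbitrary: \<mu>)
    case 0
    then show ?case using B[of \<mu>] Lf_bound[of \<eta> \<mu>] by (simp add: abs_le_iff)
  next
    case (Suc k)
    have "\<bar>Tb \<eta> W \<mu> - Tb \<eta> (Lf \<eta>) \<mu>\<bar> \<le> gam * (gam ^ k * (B + Cb \<eta>))"
      by (rule contr) (rule Suc.IH)
    then show ?case using WT[of \<mu>] Lf_fix[of \<eta> \<mu>] by simp
  qed
  then have "\<bar>W \<mu> - Lf \<eta> \<mu>\<bar> \<le> 0" for \<mu> by (intro geom_le0[OF gam(1,2)])
  then show "W = Lf \<eta>" by (intro ext) simp
qed

end



lemma cc_fst: "cc F \<Longrightarrow> cc (\<lambda>y. F (fst y))"
  unfolding cc_def by simp

context mdp
begin

lemma cc_Qacq: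
  assumes W: "\<And>\<mu>'. cc (\<lambda>\<eta>. Wf \<eta> \<mu>')" and mu: "\<And>th. 0 \<le> \<mu> th"
  shows "cc (\<lambda>\<eta>. Qacq p q c \<eta> (Wf \<eta>) l \<mu> 1)"
proof -
  have s: "cc (\<lambda>\<eta>. \<Sum>w\<in>UNIV. Wf \<eta> (Mupd p q l \<mu> w) * wt l \<mu> w)"
  proof (rule cc_sum)
    fix w
    show "cc (\<lambda>\<eta>. Wf \<eta> (Mupd p q l \<mu> w) * wt l \<mu> w)"
      by (rule cc_nnmult[OF W wt_nonneg[OF mu]])
  qed simp
  have a: "cc (\<lambda>\<eta>. eta_c \<eta> l * c l + V0 \<eta> (Mbar p l \<mu>) * (\<Sum>th\<in>UNIV. p th l * \<mu> th))"
    by (rule lin_cc[OF lin_add[OF lin_multc[OF lin_eta_c] lin_multc[OF lin_V0]]])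
  show ?thesis unfolding Qacq_eq by (rule cc_add[OF a s])
qed

lemma cc_Tb:
  assumes W: "\<And>\<mu>'. cc (\<lambda>\<eta>. Wf \<eta> \<mu>')"
  shows "cc (\<lambda>\<eta>. Tb \<eta> (Wf \<eta>) \<mu>)"
proof (cases "is_dist \<mu>")
  case True
  have "cc (\<lambda>\<eta>. min (Min (range (\<lambda>thh. Qbar \<eta> thh \<mu> 1))) (Min (range (\<lambda>l. Qacq p q c \<eta> (Wf \<eta>) l \<mu> 1))))"
    by (intro cc_min cc_Min_range lin_cc lin_Qbar cc_Qacq W) (use dist_bounds[OF True] in blast)
  then show ?thesis unfolding Tb_def bellman_def using True by simp
next
  case False
  then show ?thesis unfolding Tb_def using lin_cc[OF lin_const[of 0]] by simp
qed

lemma cc_VI: "cc (\<lambda>\<eta>. VI k \<eta> \<mu>)"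
proof (induction k arbitrary: \<mu>)
  case 0
  then show ?case using lin_cc[OF lin_const[of 0]] by simp
next
  case (Suc k)
  then show ?case using cc_Tb[of "\<lambda>\<eta>. VI k \<eta>"] by simp
qed

lemma cc_Vstar: "cc (\<lambda>\<eta>. Vstar1 p q c \<eta> \<mu>)"
  unfolding Vstar_eq by (rule cc_lim[OF cc_VI Lf_lim])

lemma cc_Qtilde:
  assumes mu: "\<And>th. 0 \<le> \<mu> th"
  shows "cc (\<lambda>\<eta>. Qtilde p q c \<eta> a \<mu> 1)"
proof (cases a)
  case (Inl l)
  then show ?thesis unfolding Qtilde_def Qstar_def using cc_Qacq[OF cc_Vstar mu] by simp
next
  case (Inr thh)
  then show ?thesis unfolding Qtilde_def using lin_cc[OF lin_Qbar] by simp
qed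

lemma Mupd_nonneg:
  assumes "\<And>th. 0 \<le> \<mu> th"
  shows "0 \<le> Mupd p q l \<mu> w th"
proof -
  have n: "0 \<le> (1 - p th' l) * q th' l w * \<mu> th'" for th'
    using p_range[of th' l] q_dist[of th' l] assms[of th'] by (simp add: is_dist_def)
  show ?thesis unfolding Mupd_def using n by (intro divide_nonneg_nonneg sum_nonneg) auto
qed

lemma belief_nonneg:
  "(\<And>th. 0 \<le> \<mu> th) \<Longrightarrow> 0 \<le> belief p q \<mu> xs th"
proof (induction xs arbitrary: \<mu>)
  case Nil
  then show ?case by simp
next
  case (Cons x xs)
  obtain a w where x: "x = (a, w)" by (cases x)
  show ?case
  proof (cases a)
    case (Inl l)
    then show ?thesis using x Cons.IH[of "Mupd p q l \<mu> w"] Mupd_nonneg[OF Cons.prems] by simp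
  next
    case (Inr thh)
    then show ?thesis using x Cons.IH[of \<mu>] Cons.prems by simp
  qed
qed

end

lemma differentiable_prod_real:
  fixes f :: "'i \<Rightarrow> 'a::real_normed_vector \<Rightarrow> real"
  shows "finite S \<Longrightarrow> (\<And>i. i \<in> S \<Longrightarrow> f i differentiable (at x)) \<Longrightarrow> (\<lambda>y. \<Prod>i\<in>S. f i y) differentiable (at x)"
proof (induction S rule: finite_induct)
  case empty
  then show ?case by simp
next
  case (insert a S)
  then show ?case by (simp add: differentiable_mult)
qed

lemma exp_differentiable: "exp differentiable (at (z::real))"
  by (rule differentiableI[OF has_field_derivative_imp_has_derivative[OF DERIV_exp]])

lemma fst_differentiable: "(\<lambda>y. fst y) differentiable (at (x :: 'a::real_normed_vector \<times> 'b::real_normed_vector))"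
  by (rule differentiableI[OF has_derivative_fst[OF has_derivative_ident]])

lemma snd_differentiable: "(\<lambda>y. snd y) differentiable (at (x :: 'a::real_normed_vector \<times> 'b::real_normed_vector))"
  by (rule differentiableI[OF has_derivative_snd[OF has_derivative_ident]])



theorem proposition7:
  fixes p :: "'th::finite \<Rightarrow> 'la::finite \<Rightarrow> real"
    and q :: "'th \<Rightarrow> 'la \<Rightarrow> 'om::finite \<Rightarrow> real"
    and c :: "'la \<Rightarrow> real"
    and prior_eta :: "('th, 'la) pref \<Rightarrow> real"
    and prior_rho :: "real \<Rightarrow> real"
    and D :: "('th, 'la, 'om) episode list"
    and Z :: real
  assumes q_dist: "\<And>th l. is_dist (q th l)"
    and p_range: "\<And>th l. 0 < p th l \<and> p th l < 1"
    and c_pos: "\<And>l. 0 < c l"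
    and D_wf: "\<And>e. e \<in> set D \<Longrightarrow> wf_episode e"
    and prior_eta_diff: "\<And>\<eta>. prior_eta differentiable (at \<eta>)"
    and prior_rho_diff: "\<And>\<rho>. prior_rho differentiable (at \<rho>)"
  shows "AE x in lborel.
           (\<lambda>y. unnorm_posterior p q c prior_eta prior_rho D y / Z) differentiable (at x)"
proof -
  interpret M: mdp p q c
    by unfold_locales (use q_dist p_range in auto)
  define bel where "bel n t = belief p q (fst (D ! n)) (take t (snd (D ! n)))" for n t
  define g where "g z = (\<lambda>y :: ('th, 'la) pref \<times> real. - Qtilde p q c (fst y) (snd (snd z)) (bel (fst z) (fst (snd z))) 1)"
    for z :: "nat \<times> nat \<times> ('la + 'th)"
  define I where "I = {z :: nat \<times> nat \<times> ('la + 'th). fst z < length D}"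
  have bel_nn: "0 \<le> bel n t th" if "n < length D" for n t th
  proof -
    have "D ! n \<in> set D" using that by simp
    then have "is_dist (fst (D ! n))" using D_wf unfolding wf_episode_def by blast
    then have "\<And>th. 0 \<le> fst (D ! n) th" unfolding is_dist_def by blast
    then show ?thesis unfolding bel_def by (rule M.belief_nonneg)
  qed
  have conv: "convex_on UNIV (g z)" if "z \<in> I" for z
  proof -
    have "cc (\<lambda>\<eta>. Qtilde p q c \<eta> (snd (snd z)) (bel (fst z) (fst (snd z))) 1)"
      by (rule M.cc_Qtilde) (use bel_nn that in \<open>auto simp: I_def\<close>)
    then have "cc (\<lambda>y :: ('th, 'la) pref \<times> real. Qtilde p q c (fst y) (snd (snd z)) (bel (fst z) (fst (snd z))) 1)"
      by (rule cc_fst)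
    then show ?thesis unfolding g_def by (rule cc_convex)
  qed
  have cI: "countable I" by (rule countable_subset[of _ UNIV]) auto
  have ae: "AE x in lborel. \<forall>z\<in>I. g z differentiable (at x)"
    by (rule AE_ball_countable'[OF _ cI]) (rule convex_ae_differentiable[OF conv])
  show ?thesis
  proof (rule AE_mp[OF ae], rule AE_I2, rule impI)
    fix x :: "('th, 'la) pref \<times> real"
    assume H: "\<forall>z\<in>I. g z differentiable (at x)"
    have Qd: "(\<lambda>y :: ('th, 'la) pref \<times> real. Qtilde p q c (fst y) a (bel n t) 1) differentiable (at x)"
      if n: "n < length D" for n t a
    proof -
      have "(n, t, a) \<in> I" using n by (simp add: I_def)
      then have "g (n, t, a) differentiable (at x)" using H by blast
      then have "(\<lambda>y. - g (n, t, a) y) differentiable (at x)" by (rule differentiable_minus)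
      then show ?thesis unfolding g_def by simp
    qed
    have Ed: "(\<lambda>y :: ('th, 'la) pref \<times> real. exp (- snd y * Qtilde p q c (fst y) a (bel n t) 1)) differentiable (at x)"
      if n: "n < length D" for n t a
    proof (rule differentiable_compose[of exp])
      show "exp differentiable (at (- snd x * Qtilde p q c (fst x) a (bel n t) 1))" by (rule exp_differentiable)
      show "(\<lambda>y :: ('th, 'la) pref \<times> real. - snd y * Qtilde p q c (fst y) a (bel n t) 1) differentiable (at x)"
        by (intro differentiable_mult differentiable_minus snd_differentiable Qd n)
    qed
    have Bd: "(\<lambda>y :: ('th, 'la) pref \<times> real. boltz p q c (fst y) (snd y) a (bel n t) 1) differentiable (at x)"
      if n: "n < length D" for n t a
    proof -
      have "(\<lambda>y :: ('th, 'la) pref \<times> real. exp (- snd y * Qtilde p q c (fst y) a (bel n t) 1)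
          / (\<Sum>b\<in>UNIV. exp (- snd y * Qtilde p q c (fst y) b (bel n t) 1))) differentiable (at x)"
      proof (rule differentiable_divide)
        show "(\<lambda>y :: ('th, 'la) pref \<times> real. exp (- snd y * Qtilde p q c (fst y) a (bel n t) 1)) differentiable (at x)"
          by (rule Ed[OF n])
        show "(\<lambda>y :: ('th, 'la) pref \<times> real. \<Sum>b\<in>UNIV. exp (- snd y * Qtilde p q c (fst y) b (bel n t) 1)) differentiable (at x)"
          by (rule differentiable_sum) (use Ed[OF n] in auto)
        show "(\<Sum>b\<in>UNIV. exp (- snd x * Qtilde p q c (fst x) b (bel n t) 1)) \<noteq> 0"
          by (simp add: sum_pos add_pos_pos less_imp_neq[symmetric] sum_pos[of UNIV])
      qed
      then show ?thesis unfolding boltz_def by simp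
    qed
    have Ld: "(\<lambda>y :: ('th, 'la) pref \<times> real. likelihood p q c D (fst y) (snd y)) differentiable (at x)"
      unfolding likelihood_def
    proof (rule differentiable_prod_real)
      fix n assume n: "n \<in> {..<length D}"
      show "(\<lambda>y :: ('th, 'la) pref \<times> real. \<Prod>t<length (snd (D ! n)).
          boltz p q c (fst y) (snd y) (fst (snd (D ! n) ! t)) (belief p q (fst (D ! n)) (take t (snd (D ! n)))) 1)
          differentiable (at x)"
      proof (rule differentiable_prod_real)
        fix t assume "t \<in> {..<length (snd (D ! n))}"
        show "(\<lambda>y :: ('th, 'la) pref \<times> real. boltz p q c (fst y) (snd y) (fst (snd (D ! n) ! t))
            (belief p q (fst (D ! n)) (take t (snd (D ! n)))) 1) differentiable (at x)"
          using Bd[of n "fst (snd (D ! n) ! t)" t] n unfolding bel_def by simp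
      qed simp
    qed simp
    have Pd: "(\<lambda>y :: ('th, 'la) pref \<times> real. prior_eta (fst y)) differentiable (at x)"
      by (rule differentiable_compose[OF prior_eta_diff fst_differentiable])
    have Rd: "(\<lambda>y :: ('th, 'la) pref \<times> real. prior_rho (snd y)) differentiable (at x)"
      by (rule differentiable_compose[OF prior_rho_diff snd_differentiable])
    have "(\<lambda>y. prior_eta (fst y) * prior_rho (snd y) * likelihood p q c D (fst y) (snd y) / Z) differentiable (at x)"
    proof (cases "Z = 0")
      case True
      then show ?thesis by simp
    next
      case False
      then show ?thesis by (intro differentiable_divide differentiable_mult Pd Rd Ld differentiable_const)
    qed
    then show "(\<lambda>y. unnorm_posterior p q c prior_eta prior_rho D y / Z) differentiable (at x)"
      unfolding unnorm_posterior_def by simp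
  qed
qed



end
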